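(* For every positive integer $n$, $\mathcal{L}_n$ is the closure in $\mathbb{R}$ of the set $\mathcal{P}_n = \{\lambda_n(\xi) : \xi \text{ a real quadratic irrational}\}$.
   Context: For an irrational real $\xi$ and positive integer $n$, $\lambda_n(\xi) = \limsup_{s/t \to \xi} \dfrac{\gcd(t,n)}{t^2 \left| \frac{s}{t} - \xi\right|}$ (limsup over rationals $s/t$, $t>0$, tending to $\xi$), and $\mathcal{L}_n = \{\lambda_n(\xi)\in\mathbb{R} : \xi\in\mathbb{R}\setminus\mathbb{Q}\}$. *)

theory Defs
  imports "HOL-Analysis.Analysis"
begin

definition lam_quot :: "nat \<Rightarrow> real \<Rightarrow> int \<Rightarrow> int \<Rightarrow> real" where
  "lam_quot n \<xi> s t = real_of_int (gcd t (int n)) / ((real_of_int t)^2 * \<bar>real_of_int s / real_of_int t - \<xi>\<bar>)"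

definition lambda_n :: "nat \<Rightarrow> real \<Rightarrow> ereal" where
  "lambda_n n \<xi> = (INF \<epsilon>\<in>{0<..}. SUP st\<in>{(s, t). t > 0 \<and> real_of_int s / real_of_int t \<noteq> \<xi> \<and>
        \<bar>real_of_int s / real_of_int t - \<xi>\<bar> < \<epsilon>}. ereal (lam_quot n \<xi> (fst st) (snd st)))"

definition L_n :: "nat \<Rightarrow> real set" where
  "L_n n = {x. \<exists>\<xi>. \<xi> \<notin> \<rat> \<and> lambda_n n \<xi> = ereal x}"

definition quadratic_irrational :: "real \<Rightarrow> bool" where
  "quadratic_irrational \<xi> \<longleftrightarrow> \<xi> \<notin> \<rat> \<and>
     (\<exists>a b c :: int. a \<noteq> 0 \<and> of_int a * \<xi>^2 + of_int b * \<xi> + of_int c = 0)"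

definition P_n :: "nat \<Rightarrow> real set" where
  "P_n n = {x. \<exists>\<xi>. quadratic_irrational \<xi> \<and> lambda_n n \<xi> = ereal x}"

end

theory Submission
  imports Defs "HOL-Library.Infinite_Set"
begin

definition valid :: "(nat \<Rightarrow> int) \<Rightarrow> bool" where
  "valid a \<longleftrightarrow> (\<forall>k\<ge>1. a k \<ge> 1)"

fun hp :: "(nat \<Rightarrow> int) \<Rightarrow> nat \<Rightarrow> int" where
  "hp a 0 = 1"
| "hp a (Suc 0) = a 0"
| "hp a (Suc (Suc k)) = a (Suc k) * hp a (Suc k) + hp a k"

fun hq :: "(nat \<Rightarrow> int) \<Rightarrow> nat \<Rightarrow> int" where
  "hq a 0 = 0"
| "hq a (Suc 0) = 1"
| "hq a (Suc (Suc k)) = a (Suc k) * hq a (Suc k) + hq a k"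

definition sh :: "(nat \<Rightarrow> int) \<Rightarrow> nat \<Rightarrow> nat \<Rightarrow> int" where
  "sh a i = (\<lambda>k. a (k + i))"

lemma sh_sh[simp]: "sh (sh a i) j = sh a (j + i)"
  by (simp add: sh_def add.assoc add.commute[of j] add.left_commute)

lemma sh_0[simp]: "sh a 0 = a" by (simp add: sh_def)

lemma sh_app: "sh a i k = a (k + i)" by (simp add: sh_def)

lemma sh_app0[simp]: "sh a i 0 = a i" by (simp add: sh_def)

lemma valid_sh: "valid a \<Longrightarrow> valid (sh a i)"
  by (simp add: valid_def sh_app)

lemma validD: "valid a \<Longrightarrow> k \<ge> 1 \<Longrightarrow> a k \<ge> 1"
  by (simp add: valid_def)

lemma hq_pos_aux: "valid a \<Longrightarrow> hq a (Suc k) \<ge> 1 \<and> hq a (Suc k) \<ge> hq a k \<and> hq a (Suc k) \<ge> int k"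
proof (induction k rule: nat_less_induct)
  case (1 k)
  show ?case
  proof (cases k)
    case 0 then show ?thesis by simp
  next
    case (Suc m)
    have am: "a (Suc m) \<ge> 1" using validD[OF "1.prems"] by simp
    have ih: "hq a (Suc m) \<ge> 1 \<and> hq a (Suc m) \<ge> hq a m \<and> hq a (Suc m) \<ge> int m"
      using "1.IH" Suc "1.prems" by blast
    have hm: "hq a m \<ge> 0"
    proof (cases m)
      case 0 then show ?thesis by simp
    next
      case (Suc l)
      have "l < k" using Suc \<open>k = Suc m\<close> by simp
      then show ?thesis using "1.IH" Suc "1.prems" by force
    qed
    have m1: "m \<ge> 1 \<Longrightarrow> hq a m \<ge> 1"
    proof -
      assume "m \<ge> 1"
      then obtain l where l: "m = Suc l" by (cases m) auto
      have "l < k" using l \<open>k = Suc m\<close> by simp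
      then show ?thesis using "1.IH" l "1.prems" by force
    qed
    have eq: "hq a (Suc k) = a (Suc m) * hq a (Suc m) + hq a m" using Suc by simp
    have pr: "a (Suc m) * hq a (Suc m) \<ge> hq a (Suc m)"
      using am ih by (simp add: mult_le_cancel_right1 order_trans)
    have kk: "hq a k = hq a (Suc m)" "int k = int m + 1" using Suc by auto
    show ?thesis
    proof (cases "m = 0")
      case True then show ?thesis unfolding eq using pr ih kk hm by (intro conjI; linarith)
    next
      case False
      then have "hq a m \<ge> 1" using m1 by simp
      then show ?thesis unfolding eq using pr ih kk hm by (intro conjI; linarith)
    qed
  qed
qed

lemma hq_Suc_pos: "valid a \<Longrightarrow> hq a (Suc k) \<ge> 1"
  using hq_pos_aux by blast

lemma hq_Suc_ge: "valid a \<Longrightarrow> hq a (Suc k) \<ge> int k"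
  using hq_pos_aux by blast

lemma hq_nonneg: assumes "valid a" shows "hq a k \<ge> 0"
proof (cases k)
  case (Suc m) then show ?thesis using hq_Suc_pos[OF assms, of m] by simp
qed simp

lemma hq_mono1: "valid a \<Longrightarrow> hq a k \<le> hq a (Suc k)"
  using hq_pos_aux by blast

lemma hq_mono: assumes "valid a" "k \<le> m" shows "hq a k \<le> hq a m"
  using assms(2)
proof (induction m rule: dec_induct)
  case (step m) then show ?case using hq_mono1[OF assms(1), of m] by simp
qed simp

lemma hp_hq_det: "hp a (Suc k) * hq a k - hp a k * hq a (Suc k) = (-1) ^ Suc k"
proof (induction k rule: nat_less_induct)
  case (1 k)
  show ?case
  proof (cases k)
    case 0 then show ?thesis by simp
  next
    case (Suc m)
    have ih: "hp a (Suc m) * hq a m - hp a m * hq a (Suc m) = (-1) ^ Suc m"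
      using "1.IH" Suc by blast
    have "hp a (Suc k) * hq a k - hp a k * hq a (Suc k)
        = (a (Suc m) * hp a (Suc m) + hp a m) * hq a (Suc m) - hp a (Suc m) * (a (Suc m) * hq a (Suc m) + hq a m)"
      using Suc by simp
    also have "\<dots> = - (hp a (Suc m) * hq a m - hp a m * hq a (Suc m))"
      by (simp add: algebra_simps)
    finally show ?thesis using ih Suc by simp
  qed
qed

lemma hp_hq_shift_gen:
  assumes b: "\<And>i. b i = a (Suc i)"
  shows "hp a (Suc (Suc k)) = a 0 * hp b (Suc k) + hq b (Suc k) \<and>
   hq a (Suc (Suc k)) = hp b (Suc k)"
proof (induction k rule: nat_less_induct)
  case (1 k)
  show ?case
  proof (cases k)
    case 0 then show ?thesis by (simp add: algebra_simps b)
  next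
    case (Suc m)
    note ih1 = "1.IH"[rule_format, of m]
    show ?thesis
    proof (cases m)
      case 0
      then show ?thesis using Suc by (simp add: algebra_simps b)
    next
      case (Suc l)
      note ih2 = "1.IH"[rule_format, of l]
      have e1: "hp a (Suc (Suc k)) = a (Suc k) * hp a (Suc k) + hp a k" by simp
      have e2: "hq a (Suc (Suc k)) = a (Suc k) * hq a (Suc k) + hq a k" by simp
      have e3: "hp b (Suc k) = a (Suc k) * hp b k + hp b m"
        using \<open>k = Suc m\<close> Suc by (simp add: b)
      have e4: "hq b (Suc k) = a (Suc k) * hq b k + hq b m"
        using \<open>k = Suc m\<close> Suc by (simp add: b)
      have i1: "hp a (Suc k) = a 0 * hp b k + hq b k \<and> hq a (Suc k) = hp b k"
        using ih1 \<open>k = Suc m\<close> Suc by simp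
      have i2: "hp a k = a 0 * hp b m + hq b m \<and> hq a k = hp b m"
        using ih2 \<open>k = Suc m\<close> Suc by simp
      show ?thesis unfolding e1 e2 e3 e4 using i1 i2 by (simp add: algebra_simps)
    qed
  qed
qed

lemma hp_hq_shift:
  "hp a (Suc (Suc k)) = a 0 * hp (sh a 1) (Suc k) + hq (sh a 1) (Suc k) \<and>
   hq a (Suc (Suc k)) = hp (sh a 1) (Suc k)"
  by (rule hp_hq_shift_gen) (simp add: sh_app)

definition conv :: "(nat \<Rightarrow> int) \<Rightarrow> nat \<Rightarrow> real" where
  "conv a k = real_of_int (hp a (Suc k)) / real_of_int (hq a (Suc k))"

definition mob :: "(nat \<Rightarrow> int) \<Rightarrow> nat \<Rightarrow> real \<Rightarrow> real" where
  "mob a k x = (real_of_int (hp a (Suc k)) * x + real_of_int (hp a k)) /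
                (real_of_int (hq a (Suc k)) * x + real_of_int (hq a k))"

lemma conv_0[simp]: "conv a 0 = a 0" by (simp add: conv_def)

lemma conv_Suc_sh: assumes "valid a" shows "conv a (Suc k) = a 0 + 1 / conv (sh a 1) k"
proof -
  have q: "hq a (Suc (Suc k)) \<ge> 1" using hq_Suc_pos[OF assms] by blast
  have q2: "hq (sh a 1) (Suc k) \<ge> 1" using hq_Suc_pos[OF valid_sh[OF assms]] by blast
  have "hp (sh a 1) (Suc k) \<noteq> 0" using hp_hq_shift[of a k] q by simp
  then show ?thesis
    using hp_hq_shift[of a k] q2
    by (simp add: conv_def field_simps)
qed


lemma hq_Suc_real_pos: "valid a \<Longrightarrow> real_of_int (hq a (Suc k)) \<ge> 1"
  using hq_Suc_pos[of a k] by linarith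

lemma hq_real_nonneg: "valid a \<Longrightarrow> real_of_int (hq a k) \<ge> 0"
  using hq_nonneg[of a k] by linarith

lemma mob_0: "x \<noteq> 0 \<Longrightarrow> mob a 0 x = a 0 + 1 / x"
  by (simp add: mob_def field_simps)

lemma mob_step:
  assumes "valid a" "x > 0"
  shows "mob a (Suc k) x = mob a k (a (Suc k) + 1 / x)"
proof -
  have c1: "real_of_int (hq a (Suc k)) \<ge> 1" using hq_Suc_real_pos[OF assms(1)] .
  have c0: "real_of_int (hq a k) \<ge> 0" using hq_real_nonneg[OF assms(1)] .
  have ak: "real_of_int (a (Suc k)) \<ge> 1" using validD[OF assms(1), of "Suc k"] by simp
  have d1: "real_of_int (hq a (Suc (Suc k))) * x + real_of_int (hq a (Suc k)) > 0"
    using hq_Suc_real_pos[OF assms(1), of "Suc k"] c1 assms(2) by (simp add: add_pos_pos)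
  have d2: "real_of_int (hq a (Suc k)) * (a (Suc k) + 1 / x) + real_of_int (hq a k) > 0"
  proof -
    have "a (Suc k) + 1 / x > 0" using ak assms(2) by (simp add: add_pos_pos)
    then have "real_of_int (hq a (Suc k)) * (a (Suc k) + 1 / x) > 0" using c1 by simp
    then show ?thesis using c0 by linarith
  qed
  define A where "A = real_of_int (hp a (Suc k))"
  define B where "B = real_of_int (hp a k)"
  define C where "C = real_of_int (hq a (Suc k))"
  define D where "D = real_of_int (hq a k)"
  define e where "e = real_of_int (a (Suc k))"
  have x0: "x \<noteq> 0" using assms(2) by simp
  have n: "A * (e + 1 / x) + B = ((e * A + B) * x + A) / x" using x0 by (simp add: field_simps)
  have dd: "C * (e + 1 / x) + D = ((e * C + D) * x + C) / x" using x0 by (simp add: field_simps)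
  have "mob a (Suc k) x = ((e * A + B) * x + A) / ((e * C + D) * x + C)"
    unfolding mob_def A_def B_def C_def D_def e_def by simp
  also have "\<dots> = (((e * A + B) * x + A) / x) / (((e * C + D) * x + C) / x)"
    using x0 by simp
  also have "\<dots> = (A * (e + 1 / x) + B) / (C * (e + 1 / x) + D)"
    unfolding n dd ..
  also have "\<dots> = mob a k (a (Suc k) + 1 / x)"
    unfolding mob_def A_def B_def C_def D_def e_def by simp
  finally show ?thesis .
qed

lemma conv_mob: "conv a (Suc k) = mob a k (a (Suc k))"
  by (simp add: conv_def mob_def mult.commute)

lemma mob_conv_diff:
  assumes "valid a" "x > 0"
  shows "mob a k x - conv a k = (-1) ^ k /
     (real_of_int (hq a (Suc k)) * (real_of_int (hq a (Suc k)) * x + real_of_int (hq a k)))"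
proof -
  have c1: "real_of_int (hq a (Suc k)) \<ge> 1" using hq_Suc_real_pos[OF assms(1)] .
  have c0: "real_of_int (hq a k) \<ge> 0" using hq_real_nonneg[OF assms(1)] .
  have d: "real_of_int (hq a (Suc k)) * x + real_of_int (hq a k) > 0"
  proof -
    have "real_of_int (hq a (Suc k)) * x > 0" using c1 assms(2) by simp
    then show ?thesis using c0 by linarith
  qed
  have det: "real_of_int (hp a (Suc k)) * real_of_int (hq a k) - real_of_int (hp a k) * real_of_int (hq a (Suc k)) = (-1) ^ Suc k"
    using arg_cong[OF hp_hq_det[of a k], of real_of_int] by simp
  have "mob a k x - conv a k =
     (real_of_int (hq a (Suc k)) * real_of_int (hp a k) - real_of_int (hp a (Suc k)) * real_of_int (hq a k)) /
     (real_of_int (hq a (Suc k)) * (real_of_int (hq a (Suc k)) * x + real_of_int (hq a k)))"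
    using c1 d unfolding mob_def conv_def by (simp add: field_simps)
  also have "\<dots> = (-1) ^ k /
     (real_of_int (hq a (Suc k)) * (real_of_int (hq a (Suc k)) * x + real_of_int (hq a k)))"
    using det by (simp add: algebra_simps)
  finally show ?thesis .
qed

lemma mob_conv_abs:
  assumes "valid a" "x \<ge> 1"
  shows "\<bar>mob a k x - conv a k\<bar> \<le> 1 / (real_of_int (hq a (Suc k)))^2"
proof -
  have c1: "real_of_int (hq a (Suc k)) \<ge> 1" using hq_Suc_real_pos[OF assms(1)] .
  have c0: "real_of_int (hq a k) \<ge> 0" using hq_real_nonneg[OF assms(1)] .
  have d: "real_of_int (hq a (Suc k)) * x + real_of_int (hq a k) \<ge> real_of_int (hq a (Suc k))"
  proof -
    have "real_of_int (hq a (Suc k)) * x \<ge> real_of_int (hq a (Suc k)) * 1"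
      using c1 assms(2) by (intro mult_left_mono) auto
    then show ?thesis using c0 by linarith
  qed
  have "\<bar>mob a k x - conv a k\<bar> = 1 /
     (real_of_int (hq a (Suc k)) * (real_of_int (hq a (Suc k)) * x + real_of_int (hq a k)))"
    using mob_conv_diff[OF assms(1), of x k] assms(2) c1 d
    by (simp add: abs_mult power_abs)
  also have "\<dots> \<le> 1 / (real_of_int (hq a (Suc k)))^2"
    using c1 d by (simp add: power2_eq_square frac_le mult_left_mono)
  finally show ?thesis .
qed

lemma mob_range:
  assumes "valid a" "z \<ge> 1" "k \<le> m"
  shows "\<exists>y\<ge>1. mob a m z = mob a k y"
  using assms(3) assms(2)
proof (induction m arbitrary: z rule: dec_induct)
  case base then show ?case by blast
next
  case (step m)
  have "mob a (Suc m) z = mob a m (a (Suc m) + 1 / z)"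
    using mob_step[OF assms(1)] step.prems by simp
  moreover have "a (Suc m) + 1 / z \<ge> 1"
  proof -
    have "real_of_int (a (Suc m)) \<ge> 1" using validD[OF assms(1), of "Suc m"] by simp
    moreover have "1 / z \<ge> 0" using step.prems by simp
    ultimately show ?thesis by linarith
  qed
  ultimately show ?case using step.IH by metis
qed

lemma conv_cauchy:
  assumes "valid a" "k \<le> m"
  shows "\<bar>conv a m - conv a k\<bar> \<le> 1 / (real_of_int (hq a (Suc k)))^2"
proof (cases "m = k")
  case True then show ?thesis by simp
next
  case False
  then obtain m' where m': "m = Suc m'" "k \<le> m'" using assms(2) by (cases m) auto
  have "conv a m = mob a m' (a (Suc m'))" using m' conv_mob by simp
  moreover have "a (Suc m') \<ge> 1" using validD[OF assms(1), of "Suc m'"] by simp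
  ultimately obtain y where "y \<ge> 1" "conv a m = mob a k y"
    using mob_range[OF assms(1) _ m'(2)] by (metis of_int_1_le_iff)
  then show ?thesis using mob_conv_abs[OF assms(1)] by simp
qed

lemma conv_Cauchy:
  assumes "valid a"
  shows "Cauchy (conv a)"
proof (rule metric_CauchyI)
  fix e :: real assume e: "e > 0"
  obtain M0 :: nat where M0: "real M0 > 2 / e" using reals_Archimedean2 by blast
  define M where "M = Suc M0"
  have M: "M \<ge> 1" "real M > 2 / e" using M0 by (auto simp: M_def)
  have hM: "real_of_int (hq a (Suc M)) \<ge> real M" using hq_Suc_ge[OF assms, of M] by linarith
  have b: "1 / (real_of_int (hq a (Suc M)))^2 < e / 2"
  proof -
    have "real M \<ge> 1" using M by simp
    then have "(real_of_int (hq a (Suc M)))^2 \<ge> real M"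
    proof -
      have "real_of_int (hq a (Suc M)) \<ge> 1" using hM \<open>real M \<ge> 1\<close> by linarith
      then have "real_of_int (hq a (Suc M)) * real_of_int (hq a (Suc M)) \<ge> real_of_int (hq a (Suc M)) * 1"
        by (intro mult_left_mono) auto
      then show ?thesis using hM by (simp add: power2_eq_square)
    qed
    moreover have "real M > 0" using M by simp
    ultimately have "1 / (real_of_int (hq a (Suc M)))^2 \<le> 1 / real M"
      by (simp add: frac_le)
    also have "\<dots> < e / 2" using M e by (simp add: field_simps)
    finally show ?thesis .
  qed
  show "\<exists>M. \<forall>m\<ge>M. \<forall>n\<ge>M. dist (conv a m) (conv a n) < e"
  proof (intro exI allI impI)
    fix m n assume "m \<ge> M" "n \<ge> M"
    then have "\<bar>conv a m - conv a M\<bar> < e/2" "\<bar>conv a n - conv a M\<bar> < e/2"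
      using conv_cauchy[OF assms] b by (meson le_less_trans)+
    then show "dist (conv a m) (conv a n) < e" unfolding dist_real_def by arith
  qed
qed

definition cfval :: "(nat \<Rightarrow> int) \<Rightarrow> real" where
  "cfval a = lim (conv a)"

lemma conv_lim: "valid a \<Longrightarrow> conv a \<longlonglongrightarrow> cfval a"
  unfolding cfval_def using conv_Cauchy Cauchy_convergent convergent_LIMSEQ_iff by blast

lemma cfval_conv_abs:
  assumes "valid a"
  shows "\<bar>cfval a - conv a k\<bar> \<le> 1 / (real_of_int (hq a (Suc k)))^2"
proof -
  have "(\<lambda>m. \<bar>conv a m - conv a k\<bar>) \<longlonglongrightarrow> \<bar>cfval a - conv a k\<bar>"
    by (intro tendsto_intros conv_lim[OF assms])
  moreover have "eventually (\<lambda>m. \<bar>conv a m - conv a k\<bar> \<le> 1 / (real_of_int (hq a (Suc k)))^2) sequentially"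
    using conv_cauchy[OF assms] by (simp add: eventually_sequentially) blast
  ultimately show ?thesis by (rule tendsto_upperbound) simp
qed

lemma conv_ge: "valid c \<Longrightarrow> conv c k \<ge> c 0 \<and> conv c k \<le> c 0 + 1"
proof (induction k arbitrary: c)
  case 0 then show ?case by simp
next
  case (Suc k)
  have v: "valid (sh c 1)" using valid_sh[OF Suc.prems] .
  have "conv (sh c 1) k \<ge> c 1" using Suc.IH[OF v] by simp
  moreover have "c 1 \<ge> 1" using validD[OF Suc.prems] by simp
  ultimately have g: "conv (sh c 1) k \<ge> 1" by linarith
  then have "1 / conv (sh c 1) k \<le> 1" "1 / conv (sh c 1) k \<ge> 0" by auto
  then show ?case using conv_Suc_sh[OF Suc.prems, of k] by simp
qed

lemma cfval_bounds: "valid c \<Longrightarrow> cfval c \<ge> c 0 \<and> cfval c \<le> c 0 + 1"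
proof -
  assume v: "valid c"
  have "cfval c \<ge> c 0"
    using conv_lim[OF v] by (rule tendsto_lowerbound) (use conv_ge[OF v] in auto)
  moreover have "cfval c \<le> c 0 + 1"
    using conv_lim[OF v] by (rule tendsto_upperbound) (use conv_ge[OF v] in auto)
  ultimately show ?thesis by simp
qed

lemma cfval_sh:
  assumes "valid a"
  shows "cfval a = a 0 + 1 / cfval (sh a 1)"
proof -
  have v: "valid (sh a 1)" using valid_sh[OF assms] .
  have pos: "cfval (sh a 1) \<ge> 1" using cfval_bounds[OF v] validD[OF assms, of 1] by simp
  have "(\<lambda>k. conv a (Suc k)) \<longlonglongrightarrow> cfval a"
    using conv_lim[OF assms] by (rule LIMSEQ_Suc)
  moreover have "(\<lambda>k. a 0 + 1 / conv (sh a 1) k) \<longlonglongrightarrow> a 0 + 1 / cfval (sh a 1)"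
    using pos by (intro tendsto_intros conv_lim[OF v]) auto
  ultimately show ?thesis
    using conv_Suc_sh[OF assms] LIMSEQ_unique by simp
qed

definition alpha :: "(nat \<Rightarrow> int) \<Rightarrow> nat \<Rightarrow> real" where
  "alpha a i = cfval (sh a i)"

lemma alpha_rec: "valid a \<Longrightarrow> alpha a i = a i + 1 / alpha a (Suc i)"
  unfolding alpha_def using cfval_sh[OF valid_sh[of a i]] by simp

lemma alpha_ge: "valid a \<Longrightarrow> alpha a i \<ge> a i \<and> alpha a i \<le> a i + 1"
  unfolding alpha_def using cfval_bounds[OF valid_sh[of a i]] by simp

lemma alpha_ge1: "valid a \<Longrightarrow> i \<ge> 1 \<Longrightarrow> alpha a i \<ge> 1"
  using alpha_ge[of a i] validD[of a i] by force

lemma cfval_mob: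
  assumes "valid a"
  shows "cfval a = mob a k (alpha a (Suc k))"
proof (induction k)
  case 0
  have "alpha a 1 \<ge> 1" using alpha_ge1[OF assms] by simp
  then show ?case using mob_0[of "alpha a 1" a] alpha_rec[OF assms, of 0]
    by (simp add: alpha_def)
next
  case (Suc k)
  have "alpha a (Suc (Suc k)) > 0" using alpha_ge1[OF assms, of "Suc (Suc k)"] by simp
  then show ?case using Suc mob_step[OF assms] alpha_rec[OF assms, of "Suc k"] by simp
qed


lemma cf_lin_bound:
  assumes "valid a"
  shows "\<bar>real_of_int (hq a (Suc k)) * cfval a - real_of_int (hp a (Suc k))\<bar> > 0 \<and>
         \<bar>real_of_int (hq a (Suc k)) * cfval a - real_of_int (hp a (Suc k))\<bar> \<le> 1 / real_of_int (hq a (Suc k))"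
proof -
  define C where "C = real_of_int (hq a (Suc k))"
  define D where "D = real_of_int (hq a k)"
  define x where "x = alpha a (Suc k)"
  have C1: "C \<ge> 1" unfolding C_def using hq_Suc_real_pos[OF assms] .
  have D0: "D \<ge> 0" unfolding D_def using hq_real_nonneg[OF assms] .
  have x1: "x \<ge> 1" unfolding x_def using alpha_ge1[OF assms] by simp
  have e: "cfval a - conv a k = (-1) ^ k / (C * (C * x + D))"
    using mob_conv_diff[OF assms, of x k] x1 cfval_mob[OF assms, of k]
    unfolding C_def D_def x_def by simp
  have d: "C * x + D \<ge> C"
  proof -
    have "C * x \<ge> C * 1" using C1 x1 by (intro mult_left_mono) auto
    then show ?thesis using D0 by linarith
  qed
  have "C * cfval a - real_of_int (hp a (Suc k)) = C * (cfval a - conv a k)"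
    using C1 unfolding conv_def C_def by (simp add: field_simps)
  also have "\<dots> = (-1) ^ k / (C * x + D)"
  proof -
    have "C \<noteq> 0" using C1 by simp
    then show ?thesis unfolding e by simp
  qed
  finally have "\<bar>C * cfval a - real_of_int (hp a (Suc k))\<bar> = 1 / (C * x + D)"
    by (simp add: abs_mult power_abs) (use C1 d in linarith)
  moreover have "1 / (C * x + D) > 0" using C1 d by simp
  moreover have "1 / (C * x + D) \<le> 1 / C" using C1 d by (simp add: frac_le)
  ultimately show ?thesis unfolding C_def by simp
qed

lemma cfval_irrat:
  assumes "valid a"
  shows "cfval a \<notin> \<rat>"
proof
  assume "cfval a \<in> \<rat>"
  then obtain r s where rs: "s > 0" "cfval a = of_int r / of_int s" by (rule Rats_cases')
  define k where "k = nat s + 1"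
  have hk: "real_of_int (hq a (Suc k)) > real_of_int s"
    using hq_Suc_ge[OF assms, of k] rs(1) unfolding k_def by linarith
  define z where "z = hq a (Suc k) * r - hp a (Suc k) * s"
  have "real_of_int z = real_of_int s * (real_of_int (hq a (Suc k)) * cfval a - real_of_int (hp a (Suc k)))"
    using rs unfolding z_def by (simp add: field_simps)
  then have za: "\<bar>real_of_int z\<bar> = real_of_int s * \<bar>real_of_int (hq a (Suc k)) * cfval a - real_of_int (hp a (Suc k))\<bar>"
    using rs(1) by (simp add: abs_mult)
  have b1: "\<bar>real_of_int z\<bar> > 0" using za cf_lin_bound[OF assms, of k] rs(1) by simp
  have "\<bar>real_of_int z\<bar> \<le> real_of_int s * (1 / real_of_int (hq a (Suc k)))"
    unfolding za using cf_lin_bound[OF assms, of k] rs(1) by (intro mult_left_mono) auto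
  also have "\<dots> < 1" using hk rs(1) by (simp add: field_simps)
  finally have "\<bar>z\<bar> < 1" by linarith
  moreover have "\<bar>z\<bar> > 0" using b1 by simp
  ultimately show False by linarith
qed

lemma alpha_irrat: "valid a \<Longrightarrow> alpha a i \<notin> \<rat>"
  unfolding alpha_def using cfval_irrat valid_sh by blast

lemma alpha_gt1: "valid a \<Longrightarrow> i \<ge> 1 \<Longrightarrow> alpha a i > 1"
  using alpha_ge1[of a i] alpha_irrat[of a i] by (metis Rats_1 le_less)

lemma conv_tendsto_crit:
  assumes "valid a" "\<And>k. \<bar>x - conv a k\<bar> \<le> 1 / (real_of_int (hq a (Suc k)))^2"
  shows "conv a \<longlonglongrightarrow> x"
proof -
  have "(\<lambda>k. conv a k - x) \<longlonglongrightarrow> 0"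
  proof (rule Lim_null_comparison)
    show "eventually (\<lambda>k. norm (conv a k - x) \<le> 1 / real k) sequentially"
      unfolding eventually_sequentially
    proof (intro exI allI impI)
      fix k :: nat assume k: "k \<ge> 1"
      have h: "real_of_int (hq a (Suc k)) \<ge> real k" using hq_Suc_ge[OF assms(1), of k] by linarith
      have h1: "real_of_int (hq a (Suc k)) \<ge> 1" using hq_Suc_real_pos[OF assms(1)] .
      have "(real_of_int (hq a (Suc k)))^2 \<ge> real_of_int (hq a (Suc k)) * 1"
        unfolding power2_eq_square using h1 by (intro mult_left_mono) auto
      then have "(real_of_int (hq a (Suc k)))^2 \<ge> real k" using h by linarith
      then have "1 / (real_of_int (hq a (Suc k)))^2 \<le> 1 / real k" using k by (simp add: frac_le)
      then show "norm (conv a k - x) \<le> 1 / real k" using assms(2)[of k] by simp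
    qed
    show "(\<lambda>k. 1 / real k) \<longlonglongrightarrow> 0" by (rule lim_1_over_n)
  qed
  then show ?thesis by (simp add: LIMSEQ_iff_nz dist_real_def tendsto_iff) 
qed

definition gauss :: "real \<Rightarrow> nat \<Rightarrow> real" where
  "gauss \<xi> i = ((\<lambda>x. 1 / (x - of_int \<lfloor>x\<rfloor>)) ^^ i) \<xi>"

lemma gauss_Suc: "gauss \<xi> (Suc i) = 1 / (gauss \<xi> i - of_int \<lfloor>gauss \<xi> i\<rfloor>)"
  by (simp add: gauss_def)

lemma frac_irrat:
  assumes "(x::real) \<notin> \<rat>"
  shows "x - of_int \<lfloor>x\<rfloor> > 0 \<and> x - of_int \<lfloor>x\<rfloor> < 1"
proof -
  have a: "of_int \<lfloor>x\<rfloor> \<le> x" "x < of_int \<lfloor>x\<rfloor> + 1" by linarith+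
  have "x \<noteq> of_int \<lfloor>x\<rfloor>" using assms by (metis Rats_of_int)
  then show ?thesis using a by linarith
qed

lemma gauss_props:
  assumes "\<xi> \<notin> \<rat>"
  shows "gauss \<xi> i \<notin> \<rat> \<and> gauss \<xi> (Suc i) > 1"
proof (induction i)
  case 0
  have f: "\<xi> - of_int \<lfloor>\<xi>\<rfloor> > 0" "\<xi> - of_int \<lfloor>\<xi>\<rfloor> < 1"
    using frac_irrat[OF assms] by auto
  have "gauss \<xi> 1 > 1" using f by (simp add: gauss_def)
  then show ?case using assms by (simp add: gauss_def)
next
  case (Suc i)
  have nq: "gauss \<xi> (Suc i) \<notin> \<rat>"
  proof
    assume "gauss \<xi> (Suc i) \<in> \<rat>"
    then have "1 / gauss \<xi> (Suc i) \<in> \<rat>" by simp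
    moreover have "1 / gauss \<xi> (Suc i) = gauss \<xi> i - of_int \<lfloor>gauss \<xi> i\<rfloor>"
      by (simp add: gauss_Suc)
    moreover have "gauss \<xi> i = (gauss \<xi> i - of_int \<lfloor>gauss \<xi> i\<rfloor>) + of_int \<lfloor>gauss \<xi> i\<rfloor>" by simp
    ultimately have "gauss \<xi> i \<in> \<rat>"
      by (metis Rats_add Rats_of_int)
    then show False using Suc by simp
  qed
  then have f: "gauss \<xi> (Suc i) - of_int \<lfloor>gauss \<xi> (Suc i)\<rfloor> > 0" "gauss \<xi> (Suc i) - of_int \<lfloor>gauss \<xi> (Suc i)\<rfloor> < 1"
    using frac_irrat by auto
  have "gauss \<xi> (Suc (Suc i)) > 1" using f gauss_Suc[of \<xi> "Suc i"] by simp
  then show ?case using nq by simp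
qed

lemma gauss_rec:
  assumes "\<xi> \<notin> \<rat>"
  shows "gauss \<xi> i = of_int \<lfloor>gauss \<xi> i\<rfloor> + 1 / gauss \<xi> (Suc i)"
  using gauss_props[OF assms, of i] by (simp add: gauss_Suc)

lemma exists_cf:
  assumes "\<xi> \<notin> \<rat>"
  shows "\<exists>a. valid a \<and> cfval a = \<xi>"
proof -
  define a where "a = (\<lambda>i. \<lfloor>gauss \<xi> i\<rfloor>)"
  have va: "valid a"
    unfolding valid_def a_def
  proof (intro allI impI)
    fix k :: nat assume "k \<ge> 1"
    then obtain j where "k = Suc j" by (cases k) auto
    then have "gauss \<xi> k > 1" using gauss_props[OF assms, of j] by simp
    then show "\<lfloor>gauss \<xi> k\<rfloor> \<ge> 1" by linarith
  qed
  have m: "\<xi> = mob a k (gauss \<xi> (Suc k))" for k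
  proof (induction k)
    case 0
    have "gauss \<xi> 1 > 1" using gauss_props[OF assms, of 0] by simp
    have g0: "gauss \<xi> 0 = \<xi>" by (simp add: gauss_def)
    have a0: "a 0 = \<lfloor>\<xi>\<rfloor>" by (simp add: a_def g0)
    show ?case using mob_0[of "gauss \<xi> 1" a] gauss_rec[OF assms, of 0] \<open>gauss \<xi> 1 > 1\<close>
      by (simp add: a0 g0)
  next
    case (Suc k)
    have "gauss \<xi> (Suc (Suc k)) > 0" using gauss_props[OF assms, of "Suc k"] by simp
    then show ?case using Suc mob_step[OF va] gauss_rec[OF assms, of "Suc k"] by (simp add: a_def)
  qed
  have "\<bar>\<xi> - conv a k\<bar> \<le> 1 / (real_of_int (hq a (Suc k)))^2" for k
    using m[of k] mob_conv_abs[OF va, of "gauss \<xi> (Suc k)" k] gauss_props[OF assms, of k] by simp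
  then have "conv a \<longlonglongrightarrow> \<xi>" using conv_tendsto_crit[OF va] by blast
  then have "cfval a = \<xi>" using conv_lim[OF va] LIMSEQ_unique by blast
  then show ?thesis using va by blast
qed


definition beta :: "(nat \<Rightarrow> int) \<Rightarrow> nat \<Rightarrow> real" where
  "beta a j = real_of_int (hq a j) / real_of_int (hq a (Suc j))"

definition sv :: "(nat \<Rightarrow> int) \<Rightarrow> nat \<Rightarrow> int \<Rightarrow> int \<Rightarrow> int" where
  "sv a j u v = u * hp a (Suc j) + v * hp a j"

definition tv :: "(nat \<Rightarrow> int) \<Rightarrow> nat \<Rightarrow> int \<Rightarrow> int \<Rightarrow> int" where
  "tv a j u v = u * hq a (Suc j) + v * hq a j"

definition val :: "nat \<Rightarrow> (nat \<Rightarrow> int) \<Rightarrow> nat \<Rightarrow> int \<Rightarrow> int \<Rightarrow> real" where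
  "val n a j u v = lam_quot n (cfval a) (sv a j u v) (tv a j u v)"

lemma beta_bounds: "valid a \<Longrightarrow> beta a j \<ge> 0 \<and> beta a j \<le> 1"
  unfolding beta_def using hq_real_nonneg[of a j] hq_Suc_real_pos[of a j] hq_mono1[of a j]
  by (simp add: divide_le_eq_1)

lemma tv_eq: "valid a \<Longrightarrow> real_of_int (tv a j u v) = real_of_int (hq a (Suc j)) * (u + v * beta a j)"
  unfolding tv_def beta_def using hq_Suc_real_pos[of a j] by (simp add: field_simps)

lemma tv_pos: "valid a \<Longrightarrow> u + v * beta a j > 0 \<Longrightarrow> tv a j u v > 0"
proof -
  assume v: "valid a" and p: "u + v * beta a j > 0"
  have "real_of_int (hq a (Suc j)) > 0" using hq_Suc_real_pos[OF v, of j] by linarith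
  then have "real_of_int (tv a j u v) > 0" using tv_eq[OF v, of j u v] p by simp
  then show ?thesis by simp
qed

lemma val_formula:
  assumes "valid a" "u + v * beta a j > 0"
  shows "val n a j u v = real_of_int (gcd (tv a j u v) (int n)) * (alpha a (Suc j) + beta a j) /
            \<bar>(u + v * beta a j) * (u - v * alpha a (Suc j))\<bar>"
proof -
  define A where "A = real_of_int (hp a (Suc j))"
  define B where "B = real_of_int (hp a j)"
  define C where "C = real_of_int (hq a (Suc j))"
  define D where "D = real_of_int (hq a j)"
  define x where "x = alpha a (Suc j)"
  define \<xi> where "\<xi> = cfval a"
  define e where "e = A * D - B * C"
  define w where "w = u + v * beta a j"
  have C1: "C \<ge> 1" unfolding C_def using hq_Suc_real_pos[OF assms(1)] .
  have D0: "D \<ge> 0" unfolding D_def using hq_real_nonneg[OF assms(1)] .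
  have x1: "x \<ge> 1" unfolding x_def using alpha_ge1[OF assms(1)] by simp
  have den: "C * x + D > 0"
  proof -
    have "C * x \<ge> C * 1" using C1 x1 by (intro mult_left_mono) auto
    then show ?thesis using C1 D0 by linarith
  qed
  have e1: "\<bar>e\<bar> = 1"
    using arg_cong[OF hp_hq_det[of a j], of real_of_int] unfolding e_def A_def B_def C_def D_def
    by (simp add: abs_mult power_abs)
  have xi: "\<xi> = (A * x + B) / (C * x + D)"
    unfolding \<xi>_def using cfval_mob[OF assms(1), of j] unfolding mob_def A_def B_def C_def D_def x_def by simp
  have bet: "beta a j = D / C" unfolding beta_def C_def D_def by simp
  have t: "real_of_int (tv a j u v) = C * w"
    unfolding w_def using tv_eq[OF assms(1)] C_def by simp
  have s: "real_of_int (sv a j u v) = u * A + v * B" unfolding sv_def A_def B_def by simp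
  have tp: "tv a j u v > 0" using tv_pos[OF assms] .
  have wp: "w > 0" using assms(2) unfolding w_def .
  have "real_of_int (tv a j u v) * \<xi> - real_of_int (sv a j u v) = - e * (u - v * x) / (C * x + D)"
  proof -
    have cw: "C * w = C * u + v * D" unfolding w_def bet using C1 by (simp add: field_simps)
    have dn: "C * x + D \<noteq> 0" using den by simp
    have "(C * u + v * D) * ((A * x + B) / (C * x + D)) - (u * A + v * B)
        = ((C * u + v * D) * (A * x + B) - (u * A + v * B) * (C * x + D)) / (C * x + D)"
      using dn by (simp add: field_simps)
    also have "(C * u + v * D) * (A * x + B) - (u * A + v * B) * (C * x + D) = - e * (u - v * x)"
      unfolding e_def by (simp add: algebra_simps)
    finally show ?thesis unfolding t s xi cw .
  qed
  then have ab: "\<bar>real_of_int (tv a j u v) * \<xi> - real_of_int (sv a j u v)\<bar> = \<bar>u - v * x\<bar> / (C * x + D)"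
    using den e1 by (simp add: abs_mult abs_divide)
  have "val n a j u v = real_of_int (gcd (tv a j u v) (int n)) /
      ((real_of_int (tv a j u v))\<^sup>2 * \<bar>real_of_int (sv a j u v) / real_of_int (tv a j u v) - \<xi>\<bar>)"
    unfolding val_def lam_quot_def \<xi>_def by simp
  also have "(real_of_int (tv a j u v))\<^sup>2 * \<bar>real_of_int (sv a j u v) / real_of_int (tv a j u v) - \<xi>\<bar>
      = real_of_int (tv a j u v) * \<bar>real_of_int (tv a j u v) * \<xi> - real_of_int (sv a j u v)\<bar>"
  proof -
    have tt: "real_of_int (tv a j u v) > 0" using tp by simp
    have "real_of_int (sv a j u v) / real_of_int (tv a j u v) - \<xi> =
          - (real_of_int (tv a j u v) * \<xi> - real_of_int (sv a j u v)) / real_of_int (tv a j u v)"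
      using tt by (simp add: field_simps)
    then show ?thesis using tt by (simp add: abs_divide power2_eq_square)
  qed
  also have "\<dots> = C * w * (\<bar>u - v * x\<bar> / (C * x + D))" using ab t by simp
  finally have "val n a j u v = real_of_int (gcd (tv a j u v) (int n)) / (C * w * (\<bar>u - v * x\<bar> / (C * x + D)))" .
  also have "\<dots> = real_of_int (gcd (tv a j u v) (int n)) * (x + D / C) / (w * \<bar>u - v * x\<bar>)"
    using C1 den by (simp add: field_simps)
  finally show ?thesis unfolding bet[symmetric] w_def x_def using wp
    by (simp add: abs_mult w_def)
qed

definition NS :: "real \<Rightarrow> real \<Rightarrow> (int \<times> int) set" where
  "NS \<xi> \<epsilon> = {(s, t). t > 0 \<and> real_of_int s / real_of_int t \<noteq> \<xi> \<and>
        \<bar>real_of_int s / real_of_int t - \<xi>\<bar> < \<epsilon>}"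

lemma lambda_n_NS: "lambda_n n \<xi> = (INF \<epsilon>\<in>{0<..}. SUP st\<in>NS \<xi> \<epsilon>. ereal (lam_quot n \<xi> (fst st) (snd st)))"
  unfolding lambda_n_def NS_def by simp

lemma lam_le:
  assumes "\<epsilon>0 > 0"
    "\<And>s t. t > 0 \<Longrightarrow> \<bar>real_of_int s / real_of_int t - \<xi>\<bar> < \<epsilon>0 \<Longrightarrow> lam_quot n \<xi> s t \<le> y"
  shows "lambda_n n \<xi> \<le> ereal y"
proof -
  have "lambda_n n \<xi> \<le> (SUP st\<in>NS \<xi> \<epsilon>0. ereal (lam_quot n \<xi> (fst st) (snd st)))"
    unfolding lambda_n_NS by (rule INF_lower) (use assms(1) in simp)
  also have "\<dots> \<le> ereal y"
  proof (rule SUP_least)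
    fix st assume "st \<in> NS \<xi> \<epsilon>0"
    then obtain s t where st: "st = (s, t)" "t > 0" "\<bar>real_of_int s / real_of_int t - \<xi>\<bar> < \<epsilon>0"
      unfolding NS_def by auto
    then show "ereal (lam_quot n \<xi> (fst st) (snd st)) \<le> ereal y" using assms(2) by simp
  qed
  finally show ?thesis .
qed

lemma lam_ge:
  assumes "\<And>\<epsilon>. \<epsilon> > 0 \<Longrightarrow> \<exists>s t. t > 0 \<and> real_of_int s / real_of_int t \<noteq> \<xi> \<and>
      \<bar>real_of_int s / real_of_int t - \<xi>\<bar> < \<epsilon> \<and> lam_quot n \<xi> s t \<ge> y"
  shows "ereal y \<le> lambda_n n \<xi>"
  unfolding lambda_n_NS
proof (rule INF_greatest)
  fix \<epsilon> :: real assume "\<epsilon> \<in> {0<..}"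
  then obtain s t where st: "t > 0" "real_of_int s / real_of_int t \<noteq> \<xi>"
      "\<bar>real_of_int s / real_of_int t - \<xi>\<bar> < \<epsilon>" "lam_quot n \<xi> s t \<ge> y"
    using assms by force
  then have "(s, t) \<in> NS \<xi> \<epsilon>" by (simp add: NS_def)
  then show "ereal y \<le> (SUP st\<in>NS \<xi> \<epsilon>. ereal (lam_quot n \<xi> (fst st) (snd st)))"
    by (rule SUP_upper2) (use st in simp)
qed

lemma lam_lt_D:
  assumes "lambda_n n \<xi> < ereal z"
  shows "\<exists>\<epsilon>0>0. \<forall>s t. t > 0 \<longrightarrow> real_of_int s / real_of_int t \<noteq> \<xi> \<longrightarrow>
      \<bar>real_of_int s / real_of_int t - \<xi>\<bar> < \<epsilon>0 \<longrightarrow> lam_quot n \<xi> s t < z"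
proof -
  obtain \<epsilon> where e: "\<epsilon> > 0" "(SUP st\<in>NS \<xi> \<epsilon>. ereal (lam_quot n \<xi> (fst st) (snd st))) < ereal z"
    using assms unfolding lambda_n_NS INF_less_iff by auto
  show ?thesis
  proof (intro exI conjI allI impI)
    fix s t :: int assume st: "t > 0" "real_of_int s / real_of_int t \<noteq> \<xi>"
      "\<bar>real_of_int s / real_of_int t - \<xi>\<bar> < \<epsilon>"
    then have "(s, t) \<in> NS \<xi> \<epsilon>" by (simp add: NS_def)
    then have "ereal (lam_quot n \<xi> (fst (s, t)) (snd (s, t))) \<le> (SUP st\<in>NS \<xi> \<epsilon>. ereal (lam_quot n \<xi> (fst st) (snd st)))"
      by (rule SUP_upper)
    then have "ereal (lam_quot n \<xi> s t) < ereal z" using e(2) by (simp only: fst_conv snd_conv)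
    then show "lam_quot n \<xi> s t < z" by simp
  qed (use e in simp)
qed

lemma lam_gt_D:
  assumes "ereal z < lambda_n n \<xi>" "\<epsilon> > 0"
  shows "\<exists>s t. t > 0 \<and> real_of_int s / real_of_int t \<noteq> \<xi> \<and>
      \<bar>real_of_int s / real_of_int t - \<xi>\<bar> < \<epsilon> \<and> lam_quot n \<xi> s t > z"
proof -
  have "lambda_n n \<xi> \<le> (SUP st\<in>NS \<xi> \<epsilon>. ereal (lam_quot n \<xi> (fst st) (snd st)))"
    unfolding lambda_n_NS by (rule INF_lower) (use assms(2) in simp)
  then have "ereal z < (SUP st\<in>NS \<xi> \<epsilon>. ereal (lam_quot n \<xi> (fst st) (snd st)))"
    using assms(1) by simp
  then obtain st where "st \<in> NS \<xi> \<epsilon>" "ereal z < ereal (lam_quot n \<xi> (fst st) (snd st))"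
    unfolding less_SUP_iff by blast
  then show ?thesis unfolding NS_def by (cases st) auto
qed

lemma far_one:
  assumes "\<xi> \<notin> \<rat>" "T > 0"
  shows "\<exists>\<epsilon>0>0. \<forall>s. \<bar>real_of_int s / real_of_int T - \<xi>\<bar> \<ge> \<epsilon>0"
proof -
  define y where "y = real_of_int T * \<xi>"
  have yq: "y \<notin> \<rat>"
  proof
    assume "y \<in> \<rat>"
    then have "y / real_of_int T \<in> \<rat>" by simp
    then show False using assms unfolding y_def by simp
  qed
  have f: "y - of_int \<lfloor>y\<rfloor> > 0" "y - of_int \<lfloor>y\<rfloor> < 1" using frac_irrat[OF yq] by auto
  define d where "d = min (y - of_int \<lfloor>y\<rfloor>) (1 - (y - of_int \<lfloor>y\<rfloor>)) / real_of_int T"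
  have Tp: "real_of_int T > 0" using assms(2) by simp
  have dp: "d > 0" unfolding d_def using f Tp by simp
  have "\<bar>real_of_int s / real_of_int T - \<xi>\<bar> \<ge> d" for s
  proof -
    have e: "real_of_int s / real_of_int T - \<xi> = (real_of_int s - y) / real_of_int T"
      unfolding y_def using Tp by (simp add: field_simps)
    have "\<bar>real_of_int s - y\<bar> \<ge> min (y - of_int \<lfloor>y\<rfloor>) (1 - (y - of_int \<lfloor>y\<rfloor>))"
    proof (cases "s \<le> \<lfloor>y\<rfloor>")
      case True
      then have "real_of_int s \<le> of_int \<lfloor>y\<rfloor>" by simp
      then show ?thesis by linarith
    next
      case False
      then have "real_of_int s \<ge> of_int \<lfloor>y\<rfloor> + 1" by simp
      then show ?thesis by linarith
    qed
    then show ?thesis unfolding e d_def using Tp by (simp add: abs_divide divide_right_mono)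
  qed
  then show ?thesis using dp by blast
qed

lemma far_small:
  assumes "\<xi> \<notin> \<rat>"
  shows "\<exists>\<epsilon>0>0. \<forall>s t. 0 < t \<longrightarrow> t < int T \<longrightarrow> \<bar>real_of_int s / real_of_int t - \<xi>\<bar> \<ge> \<epsilon>0"
proof (induction T)
  case 0 then show ?case by (intro exI[of _ 1]) auto
next
  case (Suc T)
  then obtain e1 where e1: "e1 > 0" "\<forall>s t. 0 < t \<longrightarrow> t < int T \<longrightarrow> \<bar>real_of_int s / real_of_int t - \<xi>\<bar> \<ge> e1"
    by blast
  show ?case
  proof (cases "T = 0")
    case True then show ?thesis by (intro exI[of _ 1]) auto
  next
    case False
    then obtain e2 where e2: "e2 > 0" "\<forall>s. \<bar>real_of_int s / real_of_int (int T) - \<xi>\<bar> \<ge> e2"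
      using far_one[OF assms, of "int T"] by auto
    show ?thesis
    proof (intro exI[of _ "min e1 e2"] conjI allI impI)
      fix s t :: int assume t: "0 < t" "t < int (Suc T)"
      show "\<bar>real_of_int s / real_of_int t - \<xi>\<bar> \<ge> min e1 e2"
      proof (cases "t < int T")
        case True
        then have "e1 \<le> \<bar>real_of_int s / real_of_int t - \<xi>\<bar>" using e1(2) t by blast
        then show ?thesis by (meson min.cobounded1 order_trans)
      next
        case False then have "t = int T" using t by simp
        then have "e2 \<le> \<bar>real_of_int s / real_of_int t - \<xi>\<bar>" using e2(2) by blast
        then show ?thesis by (meson min.cobounded2 order_trans)
      qed
    qed (use e1 e2 in simp)
  qed
qed

lemma hq_unbounded: "valid a \<Longrightarrow> \<exists>k. hq a (Suc k) > t"
  using hq_Suc_ge[of a "nat t + 1"] by (intro exI[of _ "nat t + 1"]) linarith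

lemma locate:
  assumes "valid a" "t \<ge> hq a (Suc J)"
  shows "\<exists>j\<ge>J. hq a (Suc j) \<le> t \<and> t < hq a (Suc (Suc j))"
proof -
  define P where "P = (\<lambda>j. t < hq a (Suc (Suc j)))"
  obtain k where "hq a (Suc k) > t" using hq_unbounded[OF assms(1)] by blast
  then have "P k" unfolding P_def using hq_mono1[OF assms(1), of "Suc k"] by simp
  define j where "j = (LEAST j. P j)"
  have Pj: "P j" unfolding j_def by (rule LeastI) fact
  have nP: "\<And>i. i < j \<Longrightarrow> \<not> P i" unfolding j_def using not_less_Least by blast
  have jJ: "j \<ge> J"
  proof (rule ccontr)
    assume "\<not> j \<ge> J"
    then have "Suc (Suc j) \<le> Suc J" by simp
    then have "hq a (Suc (Suc j)) \<le> hq a (Suc J)" using hq_mono[OF assms(1)] by blast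
    then show False using Pj assms(2) unfolding P_def by simp
  qed
  have "hq a (Suc j) \<le> t"
  proof (cases j)
    case 0
    have "hq a (Suc J) \<ge> 1" using hq_Suc_pos[OF assms(1)] .
    then show ?thesis using 0 assms(2) by simp
  next
    case (Suc i)
    then have "\<not> P i" using nP by simp
    then show ?thesis using Suc unfolding P_def by simp
  qed
  then show ?thesis using jJ Pj unfolding P_def by blast
qed

definition Bx :: "nat \<Rightarrow> real \<Rightarrow> real" where
  "Bx n M = 2 * (M + 1) + 2 * real n * (M + 2)"

lemma gcd_bounds: "n > 0 \<Longrightarrow> real_of_int (gcd t (int n)) \<ge> 1 \<and> real_of_int (gcd t (int n)) \<le> real n"
proof -
  assume n: "n > 0"
  have "gcd t (int n) > 0" using n by simp
  moreover have "gcd t (int n) \<le> int n" using n by (simp add: gcd_le2_int)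
  ultimately show ?thesis by (simp del: of_int_le_iff add: int_one_le_iff_zero_less)
qed

lemma alpha_beta_ge1: "valid a \<Longrightarrow> alpha a (Suc j) + beta a j \<ge> 1"
  using alpha_ge1[of a "Suc j"] beta_bounds[of a j] by simp

lemma rep:
  assumes va: "valid a" and n: "n > 0"
    and t1: "hq a (Suc j) \<le> t" and t2: "t < hq a (Suc (Suc j))"
    and M: "real_of_int (a (Suc j)) \<le> M"
    and lq: "lam_quot n (cfval a) s t \<ge> 1/2"
  shows "\<exists>u v. s = sv a j u v \<and> t = tv a j u v \<and> \<bar>real_of_int u\<bar> \<le> Bx n M \<and>
            \<bar>real_of_int v\<bar> \<le> Bx n M \<and> u + v * beta a j \<ge> 1"
proof -
  define e where "e = hp a (Suc j) * hq a j - hp a j * hq a (Suc j)"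
  have ee: "e * e = 1" unfolding e_def hp_hq_det by (simp add: power_mult_distrib[symmetric] flip: power_add)
  define u where "u = e * (s * hq a j - t * hp a j)"
  define v where "v = e * (t * hp a (Suc j) - s * hq a (Suc j))"
  have su: "s = sv a j u v"
  proof -
    have "sv a j u v = (e * e) * s" unfolding sv_def u_def v_def e_def by (simp add: algebra_simps)
    then show ?thesis using ee by simp
  qed
  have tu: "t = tv a j u v"
  proof -
    have "tv a j u v = (e * e) * t" unfolding tv_def u_def v_def e_def by (simp add: algebra_simps)
    then show ?thesis using ee by simp
  qed
  define C where "C = real_of_int (hq a (Suc j))"
  define w where "w = u + v * beta a j"
  define x where "x = alpha a (Suc j)"
  define b where "b = beta a j"
  have C1: "C \<ge> 1" unfolding C_def using hq_Suc_real_pos[OF va] .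
  have tw: "real_of_int t = C * w" unfolding tu w_def C_def using tv_eq[OF va] by simp
  have w1: "w \<ge> 1"
  proof -
    have "C * w \<ge> C * 1" using tw t1 unfolding C_def by simp
    then show ?thesis using C1 by (simp add: mult_le_cancel_left)
  qed
  have b01: "b \<ge> 0" "b \<le> 1" unfolding b_def using beta_bounds[OF va] by auto
  have x1: "x \<ge> 1" "x \<le> M + 1"
    unfolding x_def using alpha_ge1[OF va, of "Suc j"] alpha_ge[OF va, of "Suc j"] M by auto
  have wM: "w \<le> M + 1"
  proof -
    have "real_of_int (hq a (Suc (Suc j))) = real_of_int (a (Suc j)) * C + real_of_int (hq a j)"
      unfolding C_def by simp
    also have "\<dots> = C * (real_of_int (a (Suc j)) + b)" unfolding b_def beta_def C_def
      using C1 unfolding C_def by (simp add: field_simps)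
    finally have "C * w < C * (real_of_int (a (Suc j)) + b)" using t2 tw by linarith
    then have "w < real_of_int (a (Suc j)) + b" using C1 by (simp add: mult_less_cancel_left)
    then show ?thesis using M b01 by linarith
  qed
  have g: "real_of_int (gcd t (int n)) \<ge> 1" "real_of_int (gcd t (int n)) \<le> real n"
    using gcd_bounds[OF n] by auto
  have vf: "lam_quot n (cfval a) s t = real_of_int (gcd t (int n)) * (x + b) / \<bar>w * (u - v * x)\<bar>"
    using val_formula[OF va, of u v j n] w1 unfolding val_def su[symmetric] tu[symmetric] w_def x_def b_def
    by simp
  define z where "z = u - v * x"
  have xb: "x + b \<ge> 1" "x + b \<le> M + 2" using x1 b01 by auto
  have zb: "\<bar>z\<bar> \<le> 2 * real n * (M + 2)"
  proof (cases "z = 0")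
    case True then show ?thesis using xb by simp
  next
    case False
    have pos: "\<bar>w * z\<bar> > 0" using False w1 by simp
    have "1/2 \<le> real_of_int (gcd t (int n)) * (x + b) / \<bar>w * z\<bar>" using lq vf unfolding z_def by simp
    then have "\<bar>w * z\<bar> \<le> 2 * (real_of_int (gcd t (int n)) * (x + b))"
      using pos by (simp add: field_simps)
    also have "\<dots> \<le> 2 * (real n * (M + 2))"
      using g xb by (intro mult_left_mono mult_mono) auto
    finally have "\<bar>w\<bar> * \<bar>z\<bar> \<le> 2 * real n * (M + 2)" by (simp add: abs_mult)
    moreover have "\<bar>z\<bar> \<le> \<bar>w\<bar> * \<bar>z\<bar>" using w1 by (simp add: mult_le_cancel_right1)
    ultimately show ?thesis by linarith
  qed
  have vxb: "v * (x + b) = w - z" unfolding w_def z_def b_def by (simp add: algebra_simps)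
  have vb: "\<bar>real_of_int v\<bar> \<le> M + 1 + 2 * real n * (M + 2)"
  proof -
    have "\<bar>real_of_int v\<bar> \<le> \<bar>real_of_int v\<bar> * (x + b)" using xb by (simp add: mult_le_cancel_left1)
    also have "\<dots> = \<bar>real_of_int v * (x + b)\<bar>" using xb by (simp add: abs_mult)
    also have "\<dots> = \<bar>w - z\<bar>" using vxb by simp
    also have "\<dots> \<le> M + 1 + 2 * real n * (M + 2)" using zb w1 wM by linarith
    finally show ?thesis .
  qed
  have ub: "\<bar>real_of_int u\<bar> \<le> Bx n M"
  proof -
    have "real_of_int u = w - v * b" unfolding w_def b_def by simp
    moreover have "\<bar>v * b\<bar> \<le> \<bar>real_of_int v\<bar>"
    proof -
      have "\<bar>real_of_int v\<bar> * b \<le> \<bar>real_of_int v\<bar> * 1" using b01 by (intro mult_left_mono) auto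
      then show ?thesis using b01 by (simp add: abs_mult)
    qed
    ultimately have "\<bar>real_of_int u\<bar> \<le> w + \<bar>real_of_int v\<bar>" using w1 by linarith
    then show ?thesis using vb wM unfolding Bx_def by (smt (verit))
  qed
  have "\<bar>real_of_int v\<bar> \<le> Bx n M" using vb w1 wM unfolding Bx_def by (smt (verit))
  then show ?thesis using su tu ub w1 unfolding w_def by blast
qed


lemma val_at_10:
  assumes va: "valid a" and n: "n > 0"
  shows "val n a j 1 0 \<ge> alpha a (Suc j)"
proof -
  have b: "beta a j \<ge> 0" using beta_bounds[OF va] by simp
  have "val n a j 1 0 = real_of_int (gcd (tv a j 1 0) (int n)) * (alpha a (Suc j) + beta a j)"
    using val_formula[OF va, of 1 0 j n] by simp
  moreover have "real_of_int (gcd (tv a j 1 0) (int n)) \<ge> 1" using gcd_bounds[OF n] by blast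
  moreover have "alpha a (Suc j) + beta a j \<ge> alpha a (Suc j)" using b by simp
  moreover have "alpha a (Suc j) \<ge> 1" using alpha_ge1[OF va] by simp
  ultimately show ?thesis
    by (smt (verit, best) mult_le_cancel_right1)
qed

lemma lam_quot_pos_form:
  assumes "t > 0" "real_of_int s / real_of_int t \<noteq> \<xi>"
  shows "lam_quot n \<xi> s t * ((real_of_int t)^2 * \<bar>real_of_int s / real_of_int t - \<xi>\<bar>) = real_of_int (gcd t (int n))"
  using assms unfolding lam_quot_def by simp

lemma lam_quot_small:
  assumes n: "n > 0" and t: "t > 0" and d: "\<bar>real_of_int s / real_of_int t - \<xi>\<bar> \<ge> d" "d > 0"
  shows "lam_quot n \<xi> s t \<le> real n / ((real_of_int t)^2 * d)"
proof -
  have tp: "(real_of_int t)^2 > 0" using t by simp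
  have "lam_quot n \<xi> s t = real_of_int (gcd t (int n)) / ((real_of_int t)^2 * \<bar>real_of_int s / real_of_int t - \<xi>\<bar>)"
    unfolding lam_quot_def ..
  also have "\<dots> \<le> real n / ((real_of_int t)^2 * d)"
    using gcd_bounds[OF n, of t] tp d by (intro frac_le mult_left_mono) auto
  finally show ?thesis .
qed

lemma t_big:
  assumes va: "valid a" and w: "u + v * beta a j \<ge> 1/2"
  shows "tv a j u v > 0 \<and> (real_of_int (tv a j u v))^2 \<ge> real j / 2"
proof -
  have tp: "tv a j u v > 0" using tv_pos[OF va] w by simp
  have C: "real_of_int (hq a (Suc j)) \<ge> real j" using hq_Suc_ge[OF va, of j] by linarith
  have C1: "real_of_int (hq a (Suc j)) \<ge> 1" using hq_Suc_real_pos[OF va] .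
  have "real_of_int (tv a j u v) = real_of_int (hq a (Suc j)) * (u + v * beta a j)" using tv_eq[OF va] .
  also have "\<dots> \<ge> real_of_int (hq a (Suc j)) * (1/2)" using w C1 by (intro mult_left_mono) auto
  finally have t2: "real_of_int (tv a j u v) \<ge> real j / 2" using C by linarith
  have t1: "real_of_int (tv a j u v) \<ge> 1" using tp by simp
  have "(real_of_int (tv a j u v))^2 \<ge> real_of_int (tv a j u v) * 1"
    unfolding power2_eq_square using t1 by (intro mult_left_mono) auto
  then have "(real_of_int (tv a j u v))^2 \<ge> real j / 2" using t2 by linarith
  then show ?thesis using tp by simp
qed

lemma lam_upper:
  assumes va: "valid a" and n: "n > 0" and y: "y \<ge> 1"
    and dig: "\<And>j. j \<ge> J \<Longrightarrow> real_of_int (a (Suc j)) \<le> M"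
    and bnd: "\<And>j u v. j \<ge> J \<Longrightarrow> \<bar>real_of_int u\<bar> \<le> Bx n M \<Longrightarrow> \<bar>real_of_int v\<bar> \<le> Bx n M \<Longrightarrow>
                u + v * beta a j \<ge> 1 \<Longrightarrow> val n a j u v \<le> y"
  shows "lambda_n n (cfval a) \<le> ereal y"
proof -
  have xi: "cfval a \<notin> \<rat>" using cfval_irrat[OF va] .
  obtain e0 where e0: "e0 > 0" "\<forall>s t. 0 < t \<longrightarrow> t < int (nat (hq a (Suc J))) \<longrightarrow>
      \<bar>real_of_int s / real_of_int t - cfval a\<bar> \<ge> e0"
    using far_small[OF xi] by blast
  show ?thesis
  proof (rule lam_le[OF e0(1)])
    fix s t assume t: "t > 0" and st: "\<bar>real_of_int s / real_of_int t - cfval a\<bar> < e0"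
    have tT: "t \<ge> hq a (Suc J)"
    proof (rule ccontr)
      assume "\<not> t \<ge> hq a (Suc J)"
      then have "t < int (nat (hq a (Suc J)))" by simp
      then have "e0 \<le> \<bar>real_of_int s / real_of_int t - cfval a\<bar>" using e0(2) t by blast
      then show False using st by linarith
    qed
    show "lam_quot n (cfval a) s t \<le> y"
    proof (rule ccontr)
      assume c: "\<not> lam_quot n (cfval a) s t \<le> y"
      obtain j where j: "j \<ge> J" "hq a (Suc j) \<le> t" "t < hq a (Suc (Suc j))"
        using locate[OF va tT] by blast
      have "lam_quot n (cfval a) s t \<ge> 1/2" using c y by simp
      then obtain u v where uv: "s = sv a j u v" "t = tv a j u v" "\<bar>real_of_int u\<bar> \<le> Bx n M"
          "\<bar>real_of_int v\<bar> \<le> Bx n M" "u + v * beta a j \<ge> 1"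
        using rep[OF va n j(2) j(3) dig[OF j(1)]] by blast
      have "val n a j u v \<le> y" using bnd[OF j(1) uv(3) uv(4) uv(5)] .
      then show False using c uv unfolding val_def by simp
    qed
  qed
qed

lemma lam_lower:
  assumes va: "valid a" and n: "n > 0" and y: "y > 0"
    and io: "\<And>J. \<exists>j\<ge>J. \<exists>u v. u + v * beta a j \<ge> 1/2 \<and> val n a j u v \<ge> y"
  shows "ereal y \<le> lambda_n n (cfval a)"
proof (rule lam_ge)
  fix \<epsilon> :: real assume e: "\<epsilon> > 0"
  obtain J :: nat where J: "real J > 2 * real n / (y * \<epsilon>)" using reals_Archimedean2 by blast
  obtain j u v where j: "j \<ge> J" "u + v * beta a j \<ge> 1/2" "val n a j u v \<ge> y" using io by blast
  define s where "s = sv a j u v"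
  define t where "t = tv a j u v"
  have tb: "t > 0" "(real_of_int t)^2 \<ge> real j / 2" using t_big[OF va j(2)] unfolding t_def by auto
  have ne: "real_of_int s / real_of_int t \<noteq> cfval a"
  proof
    assume "real_of_int s / real_of_int t = cfval a"
    then have "cfval a \<in> \<rat>" by (metis Rats_divide Rats_of_int)
    then show False using cfval_irrat[OF va] by simp
  qed
  define d where "d = \<bar>real_of_int s / real_of_int t - cfval a\<bar>"
  have dp: "d > 0" unfolding d_def using ne by simp
  have lq: "lam_quot n (cfval a) s t \<ge> y" using j(3) unfolding val_def s_def t_def .
  have eq: "lam_quot n (cfval a) s t * ((real_of_int t)^2 * d) = real_of_int (gcd t (int n))"
    using lam_quot_pos_form[OF tb(1) ne] unfolding d_def .
  have tp2: "(real_of_int t)^2 > 0" using tb by simp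
  have "y * ((real_of_int t)^2 * d) \<le> lam_quot n (cfval a) s t * ((real_of_int t)^2 * d)"
    using lq tp2 dp by (intro mult_right_mono) auto
  also have "\<dots> \<le> real n" using eq gcd_bounds[OF n, of t] by simp
  finally have A: "y * ((real_of_int t)^2 * d) \<le> real n" .
  have Jp: "real J > 0"
  proof -
    have "2 * real n / (y * \<epsilon>) > 0" using n y e by simp
    then show ?thesis using J by linarith
  qed
  have B: "(real_of_int t)^2 \<ge> real J / 2" using tb(2) j(1) by (smt (verit) of_nat_mono divide_right_mono)
  have "y * (real J / 2 * d) \<le> y * ((real_of_int t)^2 * d)"
    using B y dp by (intro mult_left_mono mult_right_mono) auto
  then have "y * (real J / 2 * d) \<le> real n" using A by linarith
  then have "d \<le> 2 * real n / (y * real J)" using y Jp by (simp add: field_simps)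
  also have "\<dots> < \<epsilon>"
    using J y e Jp by (simp add: field_simps)
  finally have "d < \<epsilon>" .
  then show "\<exists>s t. t > 0 \<and> real_of_int s / real_of_int t \<noteq> cfval a \<and>
      \<bar>real_of_int s / real_of_int t - cfval a\<bar> < \<epsilon> \<and> lam_quot n (cfval a) s t \<ge> y"
    using tb(1) ne lq unfolding d_def by blast
qed

lemma lam_upper_D:
  assumes va: "valid a" and n: "n > 0" and lam: "lambda_n n (cfval a) < ereal z" and z: "z > 0"
  shows "\<exists>J. \<forall>j\<ge>J. \<forall>u v. u + v * beta a j \<ge> 1/2 \<longrightarrow> val n a j u v < z"
proof -
  obtain e0 where e0: "e0 > 0" "\<forall>s t. t > 0 \<longrightarrow> real_of_int s / real_of_int t \<noteq> cfval a \<longrightarrow>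
      \<bar>real_of_int s / real_of_int t - cfval a\<bar> < e0 \<longrightarrow> lam_quot n (cfval a) s t < z"
    using lam_lt_D[OF lam] by blast
  obtain J :: nat where J: "real J > 2 * real n / (e0 * z)" using reals_Archimedean2 by blast
  have Jp: "real J > 0"
  proof -
    have "2 * real n / (e0 * z) > 0" using n e0 z by simp
    then show ?thesis using J by linarith
  qed
  show ?thesis
  proof (intro exI allI impI)
    fix j :: nat and u v :: int assume j: "J \<le> j" and w: "u + v * beta a j \<ge> 1/2"
    define s where "s = sv a j u v"
    define t where "t = tv a j u v"
    have tb: "t > 0" "(real_of_int t)^2 \<ge> real j / 2" using t_big[OF va w] unfolding t_def by auto
    have ne: "real_of_int s / real_of_int t \<noteq> cfval a"
    proof
      assume "real_of_int s / real_of_int t = cfval a"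
      then have "cfval a \<in> \<rat>" by (metis Rats_divide Rats_of_int)
      then show False using cfval_irrat[OF va] by simp
    qed
    have "lam_quot n (cfval a) s t < z"
    proof (cases "\<bar>real_of_int s / real_of_int t - cfval a\<bar> < e0")
      case True then show ?thesis using e0(2) tb ne by blast
    next
      case False
      then have "lam_quot n (cfval a) s t \<le> real n / ((real_of_int t)^2 * e0)"
        using lam_quot_small[OF n tb(1), of e0 s "cfval a"] e0 by simp
      also have "\<dots> \<le> real n / (real J / 2 * e0)"
      proof (rule divide_left_mono)
        have "real J / 2 \<le> (real_of_int t)^2" using tb(2) j by (smt (verit) of_nat_mono divide_right_mono)
        then show "real J / 2 * e0 \<le> (real_of_int t)^2 * e0" using e0 by (intro mult_right_mono) auto
        show "0 < (real_of_int t)^2 * e0 * (real J / 2 * e0)" using tb e0 Jp by simp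
      qed simp
      also have "\<dots> < z" using J Jp e0 z by (simp add: field_simps)
      finally show ?thesis .
    qed
    then show "val n a j u v < z" unfolding val_def s_def t_def .
  qed
qed

lemma lam_lower_D:
  assumes va: "valid a" and n: "n > 0" and lam: "ereal z < lambda_n n (cfval a)" and z: "z \<ge> 1/2"
    and dig: "\<And>j. j \<ge> J0 \<Longrightarrow> real_of_int (a (Suc j)) \<le> M"
  shows "\<exists>j\<ge>J. \<exists>u v. \<bar>real_of_int u\<bar> \<le> Bx n M \<and> \<bar>real_of_int v\<bar> \<le> Bx n M \<and>
           u + v * beta a j \<ge> 1 \<and> val n a j u v > z"
proof -
  define J' where "J' = max J J0"
  have xi: "cfval a \<notin> \<rat>" using cfval_irrat[OF va] .
  obtain e0 where e0: "e0 > 0" "\<forall>s t. 0 < t \<longrightarrow> t < int (nat (hq a (Suc J'))) \<longrightarrow>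
      \<bar>real_of_int s / real_of_int t - cfval a\<bar> \<ge> e0"
    using far_small[OF xi] by blast
  obtain s t where st: "t > 0" "\<bar>real_of_int s / real_of_int t - cfval a\<bar> < e0"
      "lam_quot n (cfval a) s t > z"
    using lam_gt_D[OF lam e0(1)] by blast
  have tT: "t \<ge> hq a (Suc J')"
  proof (rule ccontr)
    assume "\<not> t \<ge> hq a (Suc J')"
    then have "t < int (nat (hq a (Suc J')))" by simp
    then have "e0 \<le> \<bar>real_of_int s / real_of_int t - cfval a\<bar>" using e0(2) st(1) by blast
    then show False using st(2) by linarith
  qed
  obtain j where j: "j \<ge> J'" "hq a (Suc j) \<le> t" "t < hq a (Suc (Suc j))"
    using locate[OF va tT] by blast
  have "lam_quot n (cfval a) s t \<ge> 1/2" using st(3) z by simp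
  then obtain u v where uv: "s = sv a j u v" "t = tv a j u v" "\<bar>real_of_int u\<bar> \<le> Bx n M"
      "\<bar>real_of_int v\<bar> \<le> Bx n M" "u + v * beta a j \<ge> 1"
  proof -
    have "j \<ge> J0" using j(1) unfolding J'_def by simp
    then show ?thesis using rep[OF va n j(2) j(3) dig[of j]] \<open>lam_quot n (cfval a) s t \<ge> 1/2\<close> that by blast
  qed
  have "val n a j u v > z" using st(3) uv unfolding val_def by simp
  then show ?thesis using uv j(1) unfolding J'_def by auto
qed

lemma lam_ge1:
  assumes va: "valid a" and n: "n > 0"
  shows "ereal 1 \<le> lambda_n n (cfval a)"
proof (rule lam_lower[OF va n])
  fix J
  have "val n a J 1 0 \<ge> 1" using val_at_10[OF va n, of J] alpha_ge1[OF va, of "Suc J"] by simp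
  then show "\<exists>j\<ge>J. \<exists>u v. u + v * beta a j \<ge> 1/2 \<and> val n a j u v \<ge> 1"
    by (intro exI[of _ J] conjI exI[of _ 1] exI[of _ 0]) auto
qed simp

lemma digits_bounded:
  assumes va: "valid a" and n: "n > 0" and lam: "lambda_n n (cfval a) = ereal y"
  shows "\<exists>J. \<forall>j\<ge>J. real_of_int (a (Suc j)) \<le> y + 1"
proof -
  have y1: "y \<ge> 1" using lam_ge1[OF va n] lam by simp
  have "lambda_n n (cfval a) < ereal (y + 1)" using lam by simp
  then obtain J where J: "\<forall>j\<ge>J. \<forall>u v. u + v * beta a j \<ge> 1/2 \<longrightarrow> val n a j u v < y + 1"
    using lam_upper_D[OF va n] y1 by fastforce
  have "real_of_int (a (Suc j)) \<le> y + 1" if "j \<ge> J" for j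
  proof -
    have "val n a j 1 0 < y + 1" using J that by force
    moreover have "val n a j 1 0 \<ge> alpha a (Suc j)" using val_at_10[OF va n] .
    moreover have "alpha a (Suc j) \<ge> a (Suc j)" using alpha_ge[OF va] by blast
    ultimately show ?thesis by linarith
  qed
  then show ?thesis by blast
qed


lemma two_step:
  fixes c0 c1 x y :: real
  assumes c: "c0 \<ge> 1" "c1 \<ge> 1" and xy: "x \<ge> 0" "y \<ge> 0"
  shows "\<bar>1 / (c0 + 1 / (c1 + x)) - 1 / (c0 + 1 / (c1 + y))\<bar> \<le> \<bar>x - y\<bar> / 4"
proof -
  have p1: "c1 + x > 0" "c1 + y > 0" using c xy by auto
  have e1: "1 / (c0 + 1 / (c1 + x)) = (c1 + x) / (c0 * (c1 + x) + 1)" using p1 by (simp add: field_simps)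
  have e2: "1 / (c0 + 1 / (c1 + y)) = (c1 + y) / (c0 * (c1 + y) + 1)" using p1 by (simp add: field_simps)
  have "c0 * (c1 + x) \<ge> 1 * 1" by (rule mult_mono) (use c xy in auto)
  then have q1: "c0 * (c1 + x) + 1 \<ge> 2" by simp
  have "c0 * (c1 + y) \<ge> 1 * 1" by (rule mult_mono) (use c xy in auto)
  then have q2: "c0 * (c1 + y) + 1 \<ge> 2" by simp
  have "(c1 + x) / (c0 * (c1 + x) + 1) - (c1 + y) / (c0 * (c1 + y) + 1)
      = ((c1 + x) * (c0 * (c1 + y) + 1) - (c1 + y) * (c0 * (c1 + x) + 1)) / ((c0 * (c1 + x) + 1) * (c0 * (c1 + y) + 1))"
    using q1 q2 by (simp add: diff_frac_eq)
  also have "(c1 + x) * (c0 * (c1 + y) + 1) - (c1 + y) * (c0 * (c1 + x) + 1) = x - y"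
    by (simp add: algebra_simps)
  finally have "(c1 + x) / (c0 * (c1 + x) + 1) - (c1 + y) / (c0 * (c1 + y) + 1)
      = (x - y) / ((c0 * (c1 + x) + 1) * (c0 * (c1 + y) + 1))" .
  then have "\<bar>1 / (c0 + 1 / (c1 + x)) - 1 / (c0 + 1 / (c1 + y))\<bar>
      = \<bar>x - y\<bar> / ((c0 * (c1 + x) + 1) * (c0 * (c1 + y) + 1))"
    unfolding e1 e2 using q1 q2 by (simp add: abs_divide abs_mult)
  also have "\<dots> \<le> \<bar>x - y\<bar> / 4"
  proof (rule divide_left_mono)
    show "4 \<le> (c0 * (c1 + x) + 1) * (c0 * (c1 + y) + 1)"
      using q1 q2 mult_mono[OF q1 q2] by simp
  qed (use q1 q2 in auto)
  finally show ?thesis .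
qed

lemma one_step:
  fixes c x y :: real
  assumes c: "c \<ge> 1" and xy: "x \<ge> 0" "y \<ge> 0"
  shows "\<bar>1 / (c + x) - 1 / (c + y)\<bar> \<le> \<bar>x - y\<bar>"
proof -
  have p: "c + x \<ge> 1" "c + y \<ge> 1" using c xy by auto
  have "1 / (c + x) - 1 / (c + y) = (1 * (c + y) - 1 * (c + x)) / ((c + x) * (c + y))"
    using p by (simp add: diff_frac_eq)
  then have "1 / (c + x) - 1 / (c + y) = (y - x) / ((c + x) * (c + y))" by simp
  then have "\<bar>1 / (c + x) - 1 / (c + y)\<bar> = \<bar>x - y\<bar> / ((c + x) * (c + y))"
    using p by (simp add: abs_divide abs_mult abs_minus_commute)
  also have "\<dots> \<le> \<bar>x - y\<bar> / 1"
    by (rule divide_left_mono) (use p mult_mono[OF p] in auto)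
  finally show ?thesis by simp
qed

lemma contraction:
  fixes f g :: "nat \<Rightarrow> real" and c :: "nat \<Rightarrow> real"
  assumes "\<And>i. i < R \<Longrightarrow> f i = 1 / (c i + f (Suc i)) \<and> g i = 1 / (c i + g (Suc i))"
    and "\<And>i. i < R \<Longrightarrow> c i \<ge> 1"
    and "\<And>i. i \<le> R \<Longrightarrow> f i \<ge> 0 \<and> f i \<le> 1 \<and> g i \<ge> 0 \<and> g i \<le> 1"
  shows "\<bar>f 0 - g 0\<bar> \<le> (1/4) ^ (R div 2)"
  using assms
proof (induction R arbitrary: f g c rule: nat_less_induct)
  case (1 R)
  show ?case
  proof (cases "R < 2")
    case True
    then have "R div 2 = 0" by simp
    moreover have "f 0 \<ge> 0" "f 0 \<le> 1" "g 0 \<ge> 0" "g 0 \<le> 1" using "1.prems"(3)[of 0] by auto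
    ultimately show ?thesis by simp
  next
    case False
    define R' where "R' = R - 2"
    have RR: "R = Suc (Suc R')" using False unfolding R'_def by simp
    have ih: "\<bar>f 2 - g 2\<bar> \<le> (1/4) ^ (R' div 2)"
    proof -
      have "\<bar>(\<lambda>i. f (i + 2)) 0 - (\<lambda>i. g (i + 2)) 0\<bar> \<le> (1/4) ^ (R' div 2)"
      proof (rule "1.IH"[rule_format, of R'])
        show "R' < R" using RR by simp
        show "\<And>i. i < R' \<Longrightarrow> f (i + 2) = 1 / (c (i + 2) + f (Suc i + 2)) \<and> g (i + 2) = 1 / (c (i + 2) + g (Suc i + 2))"
          using "1.prems"(1) RR by simp
        show "\<And>i. i < R' \<Longrightarrow> c (i + 2) \<ge> 1" using "1.prems"(2) RR by simp
        show "\<And>i. i \<le> R' \<Longrightarrow> f (i + 2) \<ge> 0 \<and> f (i + 2) \<le> 1 \<and> g (i + 2) \<ge> 0 \<and> g (i + 2) \<le> 1"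
          using "1.prems"(3) RR by simp
      qed
      then show ?thesis by (simp add: numeral_2_eq_2)
    qed
    have f0: "f 0 = 1 / (c 0 + 1 / (c 1 + f 2))" using "1.prems"(1)[of 0] "1.prems"(1)[of 1] RR
      by (simp add: numeral_2_eq_2)
    have g0: "g 0 = 1 / (c 0 + 1 / (c 1 + g 2))" using "1.prems"(1)[of 0] "1.prems"(1)[of 1] RR
      by (simp add: numeral_2_eq_2)
    have "\<bar>f 0 - g 0\<bar> \<le> \<bar>f 2 - g 2\<bar> / 4"
      unfolding f0 g0 by (rule two_step) (use "1.prems"(2)[of 0] "1.prems"(2)[of 1] "1.prems"(3)[of 2] RR in auto)
    also have "\<dots> \<le> (1/4) ^ (R' div 2) / 4" using ih by simp
    also have "\<dots> = (1/4) ^ (R div 2)" using RR by simp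
    finally show ?thesis .
  qed
qed

lemma beta_0: "beta a 0 = 0" by (simp add: beta_def)

lemma beta_rec:
  assumes "valid a"
  shows "beta a (Suc j) = 1 / (a (Suc j) + beta a j)"
proof -
  have C: "real_of_int (hq a (Suc j)) \<ge> 1" using hq_Suc_real_pos[OF assms] .
  have "beta a (Suc j) = real_of_int (hq a (Suc j)) / (a (Suc j) * real_of_int (hq a (Suc j)) + real_of_int (hq a j))"
    unfolding beta_def by simp
  also have "\<dots> = 1 / (a (Suc j) + beta a j)"
    unfolding beta_def using C by (simp add: field_simps)
  finally show ?thesis .
qed

definition gam :: "(nat \<Rightarrow> int) \<Rightarrow> nat \<Rightarrow> real" where
  "gam a i = 1 / alpha a i"

lemma gam_rec: "valid a \<Longrightarrow> i \<ge> 1 \<Longrightarrow> gam a i = 1 / (a i + gam a (Suc i))"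
  unfolding gam_def using alpha_rec[of a i] by simp

lemma gam_bounds: "valid a \<Longrightarrow> i \<ge> 1 \<Longrightarrow> gam a i \<ge> 0 \<and> gam a i \<le> 1"
  unfolding gam_def using alpha_ge1[of a i] by simp

lemma alpha_gam: "valid a \<Longrightarrow> alpha a (Suc j) = a (Suc j) + gam a (Suc (Suc j))"
  unfolding gam_def using alpha_rec[of a "Suc j"] by simp

definition agree :: "(nat \<Rightarrow> int) \<Rightarrow> nat \<Rightarrow> (nat \<Rightarrow> int) \<Rightarrow> nat \<Rightarrow> nat \<Rightarrow> bool" where
  "agree a j b m R \<longleftrightarrow> (\<forall>r<R. a (j + 1 + r) = b (m + 1 + r)) \<and> (\<forall>r<R. a (j - r) = b (m - r)) \<and> R \<le> j \<and> R \<le> m"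

lemma beta_close:
  assumes va: "valid a" and vb: "valid b" and ag: "agree a j b m R"
  shows "\<bar>beta a j - beta b m\<bar> \<le> (1/4) ^ (R div 2)"
proof -
  have R: "R \<le> j" "R \<le> m" and dg: "\<And>r. r < R \<Longrightarrow> a (j - r) = b (m - r)" using ag unfolding agree_def by auto
  have "\<bar>(\<lambda>i. beta a (j - i)) 0 - (\<lambda>i. beta b (m - i)) 0\<bar> \<le> (1/4) ^ (R div 2)"
  proof (rule contraction[where c = "\<lambda>i. real_of_int (a (j - i))"])
    fix i assume i: "i < R"
    have ja: "j - i = Suc (j - Suc i)" using i R by simp
    have mb: "m - i = Suc (m - Suc i)" using i R by simp
    show "beta a (j - i) = 1 / (real_of_int (a (j - i)) + beta a (j - Suc i)) \<and>
          beta b (m - i) = 1 / (real_of_int (a (j - i)) + beta b (m - Suc i))"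
      using beta_rec[OF va, of "j - Suc i"] beta_rec[OF vb, of "m - Suc i"] dg[OF i]
      by (simp add: ja mb)
    show "real_of_int (a (j - i)) \<ge> 1" using validD[OF va, of "j - i"] i R by simp
  next
    fix i show "beta a (j - i) \<ge> 0 \<and> beta a (j - i) \<le> 1 \<and> beta b (m - i) \<ge> 0 \<and> beta b (m - i) \<le> 1"
      using beta_bounds[OF va] beta_bounds[OF vb] by auto
  qed
  then show ?thesis by simp
qed

lemma alpha_close:
  assumes va: "valid a" and vb: "valid b" and ag: "agree a j b m R" and R1: "R \<ge> 1"
  shows "\<bar>alpha a (Suc j) - alpha b (Suc m)\<bar> \<le> (1/4) ^ ((R - 1) div 2)"
proof -
  have dg: "\<And>r. r < R \<Longrightarrow> a (j + 1 + r) = b (m + 1 + r)" using ag unfolding agree_def by auto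
  have d0: "a (Suc j) = b (Suc m)" using dg[of 0] R1 by simp
  have "\<bar>(\<lambda>i. gam a (j + 2 + i)) 0 - (\<lambda>i. gam b (m + 2 + i)) 0\<bar> \<le> (1/4) ^ ((R - 1) div 2)"
  proof (rule contraction[where c = "\<lambda>i. real_of_int (a (j + 2 + i))"])
    fix i assume i: "i < R - 1"
    have e: "a (j + 2 + i) = b (m + 2 + i)" using dg[of "Suc i"] i by simp
    show "gam a (j + 2 + i) = 1 / (real_of_int (a (j + 2 + i)) + gam a (j + 2 + Suc i)) \<and>
          gam b (m + 2 + i) = 1 / (real_of_int (a (j + 2 + i)) + gam b (m + 2 + Suc i))"
      using gam_rec[OF va, of "j + 2 + i"] gam_rec[OF vb, of "m + 2 + i"] e by simp
    show "real_of_int (a (j + 2 + i)) \<ge> 1" using validD[OF va, of "j + 2 + i"] by simp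
  next
    fix i show "gam a (j + 2 + i) \<ge> 0 \<and> gam a (j + 2 + i) \<le> 1 \<and> gam b (m + 2 + i) \<ge> 0 \<and> gam b (m + 2 + i) \<le> 1"
      using gam_bounds[OF va, of "j + 2 + i"] gam_bounds[OF vb, of "m + 2 + i"] by auto
  qed
  then have "\<bar>gam a (Suc (Suc j)) - gam b (Suc (Suc m))\<bar> \<le> (1/4) ^ ((R - 1) div 2)" by simp
  then show ?thesis using alpha_gam[OF va, of j] alpha_gam[OF vb, of m] d0 by simp
qed

definition st :: "nat \<Rightarrow> (nat \<Rightarrow> int) \<Rightarrow> nat \<Rightarrow> int \<times> int" where
  "st n a j = (hq a (Suc j) mod int n, hq a j mod int n)"

lemma st_gcd:
  assumes "st n a j = st n b m"
  shows "gcd (tv a j u v) (int n) = gcd (tv b m u v) (int n)"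
proof -
  have "tv a j u v mod int n = tv b m u v mod int n"
  proof -
    have c1: "hq a (Suc j) mod int n = hq b (Suc m) mod int n" and c2: "hq a j mod int n = hq b m mod int n"
      using assms unfolding st_def by auto
    have m1: "u * hq a (Suc j) mod int n = u * hq b (Suc m) mod int n"
      by (metis c1 mod_mult_right_eq)
    have m2: "v * hq a j mod int n = v * hq b m mod int n"
      by (metis c2 mod_mult_right_eq)
    show ?thesis unfolding tv_def by (rule mod_add_cong[OF m1 m2])
  qed
  then show ?thesis by (metis gcd_red_int)
qed


lemma close_quot:
  fixes \<alpha> \<beta> \<alpha>' \<beta>' u v g n M B Y d :: real
  assumes ha: "1 \<le> \<alpha>" "\<alpha> \<le> M + 1" and ha': "1 \<le> \<alpha>'"
    and hb: "0 \<le> \<beta>" "\<beta> \<le> 1" and hb': "0 \<le> \<beta>'" "\<beta>' \<le> 1"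
    and da: "\<bar>\<alpha> - \<alpha>'\<bar> \<le> d" and db: "\<bar>\<beta> - \<beta>'\<bar> \<le> d" and d1: "d \<le> 1"
    and hu: "\<bar>u\<bar> \<le> B" and hv: "\<bar>v\<bar> \<le> B" and hg: "1 \<le> g" "g \<le> n" and M0: "M \<ge> 0"
    and X: "\<bar>(u + v * \<beta>) * (u - v * \<alpha>)\<bar> > 0"
    and Y: "g * (\<alpha> + \<beta>) / \<bar>(u + v * \<beta>) * (u - v * \<alpha>)\<bar> \<le> Y"
    and dK: "d * (B^2 * (M + 5)) \<le> 1 / (2 * Y)"
  shows "\<bar>g * (\<alpha>' + \<beta>') / \<bar>(u + v * \<beta>') * (u - v * \<alpha>')\<bar> - g * (\<alpha> + \<beta>) / \<bar>(u + v * \<beta>) * (u - v * \<alpha>)\<bar>\<bar>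
           \<le> d * (4 * n * Y + 2 * (B^2 * (M + 5)) * Y^2)"
proof -
  define w where "w = u + v * \<beta>"
  define z where "z = u - v * \<alpha>"
  define w' where "w' = u + v * \<beta>'"
  define z' where "z' = u - v * \<alpha>'"
  define X where "X = \<bar>w * z\<bar>"
  define X' where "X' = \<bar>w' * z'\<bar>"
  define N where "N = g * (\<alpha> + \<beta>)"
  define N' where "N' = g * (\<alpha>' + \<beta>')"
  define K where "K = B^2 * (M + 5)"
  have d0: "d \<ge> 0" using db by linarith
  have B0: "B \<ge> 0" using hu by linarith
  have Xp: "X > 0" using X unfolding X_def w_def z_def .
  have N1: "N \<ge> 1"
  proof -
    have "\<alpha> + \<beta> \<ge> 1" using ha hb by linarith
    then have "g * (\<alpha> + \<beta>) \<ge> 1 * 1" using hg by (intro mult_mono) auto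
    then show ?thesis unfolding N_def by simp
  qed
  have NX: "N / X \<le> Y" using Y unfolding N_def X_def w_def z_def .
  have Yp: "Y > 0"
  proof -
    have "N / X > 0" using N1 Xp by simp
    then show ?thesis using NX by linarith
  qed
  have NYX: "N \<le> Y * X" using NX Xp by (simp add: field_simps)
  have X1: "X \<ge> 1 / Y" using NYX N1 Yp by (simp add: field_simps)
  have dw: "\<bar>w - w'\<bar> \<le> B * d"
  proof -
    have "\<bar>w - w'\<bar> = \<bar>v\<bar> * \<bar>\<beta> - \<beta>'\<bar>" unfolding w_def w'_def by (simp add: abs_mult[symmetric] algebra_simps)
    also have "\<dots> \<le> B * d" using hv db by (intro mult_mono) auto
    finally show ?thesis .
  qed
  have dz: "\<bar>z - z'\<bar> \<le> B * d"
  proof -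
    have "\<bar>z - z'\<bar> = \<bar>v\<bar> * \<bar>\<alpha> - \<alpha>'\<bar>" unfolding z_def z'_def by (simp add: abs_mult[symmetric] algebra_simps)
    also have "\<dots> \<le> B * d" using hv da by (intro mult_mono) auto
    finally show ?thesis .
  qed
  have wb: "\<bar>w\<bar> \<le> 2 * B"
  proof -
    have "\<bar>v * \<beta>\<bar> \<le> B * 1" unfolding abs_mult using hv hb by (intro mult_mono) auto
    then show ?thesis unfolding w_def using hu by linarith
  qed
  have zb: "\<bar>z'\<bar> \<le> B * (M + 3)"
  proof -
    have "\<alpha>' \<le> M + 2" using da ha d1 by linarith
    then have "\<bar>v * \<alpha>'\<bar> \<le> B * (M + 2)" unfolding abs_mult using hv ha' by (intro mult_mono) auto
    then show ?thesis unfolding z'_def using hu by (simp add: algebra_simps)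
  qed
  have dwz: "\<bar>w * z - w' * z'\<bar> \<le> K * d"
  proof -
    have "w * z - w' * z' = w * (z - z') + z' * (w - w')" by (simp add: algebra_simps)
    then have "\<bar>w * z - w' * z'\<bar> \<le> \<bar>w\<bar> * \<bar>z - z'\<bar> + \<bar>z'\<bar> * \<bar>w - w'\<bar>"
      by (simp add: abs_mult[symmetric] abs_triangle_ineq)
    also have "\<dots> \<le> (2 * B) * (B * d) + (B * (M + 3)) * (B * d)"
      using wb zb dw dz B0 d0 M0 by (intro add_mono mult_mono) auto
    also have "\<dots> = K * d" unfolding K_def by (simp add: algebra_simps power2_eq_square)
    finally show ?thesis .
  qed
  have dX: "\<bar>X - X'\<bar> \<le> K * d"
  proof -
    have "\<bar>X - X'\<bar> \<le> \<bar>w * z - w' * z'\<bar>" unfolding X_def X'_def by (rule abs_triangle_ineq3)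
    then show ?thesis using dwz by linarith
  qed
  have Kd: "K * d \<le> 1 / (2 * Y)" using dK unfolding K_def by (simp add: mult.commute)
  have X'1: "X' \<ge> 1 / (2 * Y)"
  proof -
    have "1 / Y - 1 / (2 * Y) = 1 / (2 * Y)" using Yp by (simp add: field_simps)
    then show ?thesis using X1 dX Kd by linarith
  qed
  have X'p: "X' > 0" using X'1 Yp by (smt (verit) divide_pos_pos)
  have dN: "\<bar>N' - N\<bar> \<le> 2 * n * d"
  proof -
    have "N' - N = g * ((\<alpha>' - \<alpha>) + (\<beta>' - \<beta>))" unfolding N_def N'_def by (simp add: algebra_simps)
    then have "\<bar>N' - N\<bar> = g * \<bar>(\<alpha>' - \<alpha>) + (\<beta>' - \<beta>)\<bar>" using hg by (simp add: abs_mult)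
    also have "\<dots> \<le> n * (2 * d)"
    proof (rule mult_mono)
      show "\<bar>(\<alpha>' - \<alpha>) + (\<beta>' - \<beta>)\<bar> \<le> 2 * d" using da db by linarith
    qed (use hg d0 in auto)
    finally show ?thesis by simp
  qed
  have eq: "N' / X' - N / X = (N' - N) / X' + (N / X) * ((X - X') / X')"
    using Xp X'p by (simp add: field_simps)
  have t1: "\<bar>(N' - N) / X'\<bar> \<le> 2 * n * d * (2 * Y)"
  proof -
    have "\<bar>(N' - N) / X'\<bar> = \<bar>N' - N\<bar> * (1 / X')" using X'p by (simp add: abs_divide)
    also have "\<dots> \<le> (2 * n * d) * (2 * Y)"
    proof (rule mult_mono)
      show "1 / X' \<le> 2 * Y" using X'1 X'p Yp by (simp add: field_simps)
    qed (use dN X'p Yp d0 hg in auto)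
    finally show ?thesis .
  qed
  have t2: "\<bar>(N / X) * ((X - X') / X')\<bar> \<le> Y * (K * d * (2 * Y))"
  proof -
    have NX0: "N / X \<ge> 0" using N1 Xp by simp
    have "\<bar>(X - X') / X'\<bar> = \<bar>X - X'\<bar> * (1 / X')" using X'p by (simp add: abs_divide)
    also have "\<dots> \<le> (K * d) * (2 * Y)"
    proof (rule mult_mono)
      show "1 / X' \<le> 2 * Y" using X'1 X'p Yp by (simp add: field_simps)
    qed (use dX X'p Yp in auto)
    finally have "\<bar>(X - X') / X'\<bar> \<le> K * d * (2 * Y)" .
    then show ?thesis unfolding abs_mult using NX NX0 by (intro mult_mono) auto
  qed
  have "\<bar>N' / X' - N / X\<bar> \<le> 2 * n * d * (2 * Y) + Y * (K * d * (2 * Y))"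
    unfolding eq using t1 t2 abs_triangle_ineq[of "(N' - N) / X'" "(N / X) * ((X - X') / X')"] by linarith
  also have "\<dots> = d * (4 * n * Y + 2 * K * Y^2)" by (simp add: algebra_simps power2_eq_square)
  finally show ?thesis unfolding N_def N'_def X_def X'_def w_def z_def w'_def z'_def K_def .
qed

lemma z_nonzero:
  assumes va: "valid a" and w: "real_of_int u + real_of_int v * beta a j > 0"
  shows "real_of_int u - real_of_int v * alpha a (Suc j) \<noteq> 0"
proof
  assume z: "real_of_int u - real_of_int v * alpha a (Suc j) = 0"
  show False
  proof (cases "v = 0")
    case True
    then have "u = 0" using z by simp
    then show False using w True by simp
  next
    case False
    then have "alpha a (Suc j) = real_of_int u / real_of_int v" using z by (simp add: field_simps)
    then have "alpha a (Suc j) \<in> \<rat>" by simp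
    then show False using alpha_irrat[OF va] by blast
  qed
qed

lemma transfer_val:
  assumes va: "valid a" and vb: "valid b" and n: "n > 0" and M0: "M \<ge> 0"
    and dig: "real_of_int (a (Suc j)) \<le> M"
    and ag: "agree a j b m R" and R1: "R \<ge> 1" and stq: "st n a j = st n b m"
    and dR: "(1/4) ^ ((R - 1) div 2) \<le> d" and d1: "d \<le> 1"
    and dK: "d * (B^2 * (M + 5)) \<le> 1 / (2 * Y)"
    and hu: "\<bar>real_of_int u\<bar> \<le> B" and hv: "\<bar>real_of_int v\<bar> \<le> B"
    and wa: "u + v * beta a j \<ge> 1/2" and wb: "u + v * beta b m \<ge> 1/2"
    and Y: "val n a j u v \<le> Y"
  shows "\<bar>val n b m u v - val n a j u v\<bar> \<le> d * (4 * n * Y + 2 * (B^2 * (M + 5)) * Y^2)"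
proof -
  have fa: "val n a j u v = real_of_int (gcd (tv a j u v) (int n)) * (alpha a (Suc j) + beta a j) /
            \<bar>(u + v * beta a j) * (u - v * alpha a (Suc j))\<bar>"
    using val_formula[OF va] wa by simp
  have fb: "val n b m u v = real_of_int (gcd (tv a j u v) (int n)) * (alpha b (Suc m) + beta b m) /
            \<bar>(u + v * beta b m) * (u - v * alpha b (Suc m))\<bar>"
    using val_formula[OF vb] wb st_gcd[OF stq, of u v] by simp
  have g: "1 \<le> real_of_int (gcd (tv a j u v) (int n))" "real_of_int (gcd (tv a j u v) (int n)) \<le> real n"
    using gcd_bounds[OF n] by auto
  have X: "\<bar>(u + v * beta a j) * (u - v * alpha a (Suc j))\<bar> > 0"
    using z_nonzero[OF va, of u v j] wa by simp
  have b4: "(1/4::real) ^ (R div 2) \<le> (1/4) ^ ((R - 1) div 2)"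
    by (rule power_decreasing) (auto simp: div_le_mono)
  have da: "\<bar>alpha a (Suc j) - alpha b (Suc m)\<bar> \<le> d" using alpha_close[OF va vb ag R1] dR by linarith
  have db: "\<bar>beta a j - beta b m\<bar> \<le> d" using beta_close[OF va vb ag] b4 dR by linarith
  show ?thesis
    unfolding fa fb
    by (rule close_quot) (use alpha_ge1[OF va, of "Suc j"] alpha_ge[OF va, of "Suc j"] dig
       alpha_ge1[OF vb, of "Suc m"] beta_bounds[OF va, of j] beta_bounds[OF vb, of m] da db d1 hu hv g M0 X
       Y fa dK in auto)
qed

lemma adm_transfer:
  assumes "\<bar>beta a j - beta b m\<bar> \<le> d" "\<bar>real_of_int v\<bar> \<le> B" "d * B \<le> 1/2" "d \<ge> 0"
    and "u + v * beta b m \<ge> 1"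
  shows "u + v * beta a j \<ge> 1/2"
proof -
  have "\<bar>v * beta a j - v * beta b m\<bar> = \<bar>real_of_int v\<bar> * \<bar>beta a j - beta b m\<bar>"
    by (simp add: abs_mult[symmetric] algebra_simps)
  also have "\<dots> \<le> B * d" using assms(1,2,4) by (intro mult_mono) auto
  finally have "\<bar>v * beta a j - v * beta b m\<bar> \<le> 1/2" using assms(3) by (simp add: mult.commute)
  then show ?thesis using assms(5) by linarith
qed

lemma quarter_small:
  assumes "\<delta> > 0"
  shows "\<exists>R0. \<forall>R\<ge>R0. (1/4::real) ^ ((R - 1) div 2) \<le> \<delta>"
proof -
  obtain k where k: "(1/4::real) ^ k < \<delta>" using real_arch_pow_inv[OF assms, of "1/4"] by auto
  show ?thesis
  proof (intro exI allI impI)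
    fix R :: nat assume "R \<ge> 2 * k + 1"
    then have "(R - 1) div 2 \<ge> k" by simp
    then have "(1/4::real) ^ ((R - 1) div 2) \<le> (1/4) ^ k" by (rule power_decreasing) auto
    then show "(1/4::real) ^ ((R - 1) div 2) \<le> \<delta>" using k by linarith
  qed
qed


lemma hq_coprime: "coprime (hq a (Suc k)) (hq a k)"
proof (rule coprimeI)
  fix c assume c1: "c dvd hq a (Suc k)" and c2: "c dvd hq a k"
  have "c dvd hp a (Suc k) * hq a k - hp a k * hq a (Suc k)"
    using c1 c2 by (simp add: dvd_diff)
  then have "c dvd (-1) ^ Suc k" unfolding hp_hq_det .
  moreover have "((-1::int) ^ Suc k) dvd 1" by (simp add: power_minus1_odd)
  ultimately have "c dvd 1" by (rule dvd_trans)
  then show "is_unit c" by simp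
qed

lemma hq_strict: "valid a \<Longrightarrow> k \<ge> 1 \<Longrightarrow> hq a (Suc (Suc k)) > hq a (Suc k)"
proof -
  assume va: "valid a" and k: "k \<ge> 1"
  have "hq a k \<ge> 1" using hq_Suc_pos[OF va, of "k - 1"] k by simp
  moreover have "a (Suc k) * hq a (Suc k) \<ge> hq a (Suc k)"
    using validD[OF va, of "Suc k"] hq_Suc_pos[OF va, of k] by (simp add: mult_le_cancel_right1 order_trans)
  ultimately show ?thesis by simp
qed

lemma hq_strict_mono: "valid a \<Longrightarrow> k \<ge> 1 \<Longrightarrow> P \<ge> 1 \<Longrightarrow> hq a (Suc (k + P)) > hq a (Suc k)"
proof -
  assume va: "valid a" and k: "k \<ge> 1" and P: "P \<ge> 1"
  have "hq a (Suc (Suc k)) > hq a (Suc k)" using hq_strict[OF va k] .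
  moreover have "hq a (Suc (k + P)) \<ge> hq a (Suc (Suc k))" using hq_mono[OF va, of "Suc (Suc k)" "Suc (k + P)"] P by linarith
  ultimately show ?thesis by simp
qed

lemma periodic_quadratic:
  assumes vb: "valid b" and P: "P \<ge> 1" and i: "i \<ge> 1" and per: "\<And>k. k > i \<Longrightarrow> b (k + P) = b k"
  shows "quadratic_irrational (cfval b)"
proof -
  define \<eta> where "\<eta> = cfval b"
  have shq: "sh b (Suc i) = sh b (Suc (i + P))"
  proof
    fix k show "sh b (Suc i) k = sh b (Suc (i + P)) k"
      using per[of "k + Suc i"] unfolding sh_app by (simp add: algebra_simps)
  qed
  define x where "x = alpha b (Suc i)"
  have x2: "alpha b (Suc (i + P)) = x" unfolding x_def alpha_def using shq by simp
  define A1 where "A1 = hp b (Suc i)"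
  define B1 where "B1 = hp b i"
  define C1 where "C1 = hq b (Suc i)"
  define D1 where "D1 = hq b i"
  define A2 where "A2 = hp b (Suc (i + P))"
  define B2 where "B2 = hp b (i + P)"
  define C2 where "C2 = hq b (Suc (i + P))"
  define D2 where "D2 = hq b (i + P)"
  have x1: "x \<ge> 1" unfolding x_def using alpha_ge1[OF vb] by simp
  have C1p: "C1 \<ge> 1" unfolding C1_def using hq_Suc_pos[OF vb] .
  have C2p: "C2 \<ge> 1" unfolding C2_def using hq_Suc_pos[OF vb] .
  have D1p: "D1 \<ge> 0" unfolding D1_def using hq_nonneg[OF vb] .
  have D2p: "D2 \<ge> 0" unfolding D2_def using hq_nonneg[OF vb] .
  have den1: "real_of_int C1 * x + real_of_int D1 > 0"
  proof -
    have "real_of_int C1 * x \<ge> 1 * 1" using C1p x1 by (intro mult_mono) auto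
    then show ?thesis using D1p by linarith
  qed
  have den2: "real_of_int C2 * x + real_of_int D2 > 0"
  proof -
    have "real_of_int C2 * x \<ge> 1 * 1" using C2p x1 by (intro mult_mono) auto
    then show ?thesis using D2p by linarith
  qed
  have e1: "\<eta> * (real_of_int C1 * x + real_of_int D1) = real_of_int A1 * x + real_of_int B1"
    using cfval_mob[OF vb, of i] den1 unfolding \<eta>_def mob_def x_def A1_def B1_def C1_def D1_def by simp
  have e2: "\<eta> * (real_of_int C2 * x + real_of_int D2) = real_of_int A2 * x + real_of_int B2"
    using cfval_mob[OF vb, of "i + P"] den2 x2 unfolding \<eta>_def mob_def A2_def B2_def C2_def D2_def by simp
  have irr: "\<eta> \<notin> \<rat>" unfolding \<eta>_def using cfval_irrat[OF vb] .
  have f1: "x * (real_of_int C1 * \<eta> - real_of_int A1) = real_of_int B1 - real_of_int D1 * \<eta>"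
    using e1 by (simp add: algebra_simps)
  have f2: "x * (real_of_int C2 * \<eta> - real_of_int A2) = real_of_int B2 - real_of_int D2 * \<eta>"
    using e2 by (simp add: algebra_simps)
  have key: "(real_of_int B1 - real_of_int D1 * \<eta>) * (real_of_int C2 * \<eta> - real_of_int A2) =
             (real_of_int B2 - real_of_int D2 * \<eta>) * (real_of_int C1 * \<eta> - real_of_int A1)"
    unfolding f1[symmetric] f2[symmetric] by (simp add: algebra_simps)
  define qa where "qa = D2 * C1 - D1 * C2"
  define qb where "qb = B1 * C2 + D1 * A2 - B2 * C1 - D2 * A1"
  define qc where "qc = B2 * A1 - B1 * A2"
  have poly: "of_int qa * \<eta>^2 + of_int qb * \<eta> + of_int qc = 0"
    using key unfolding qa_def qb_def qc_def by (simp add: algebra_simps power2_eq_square)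
  have qa0: "qa \<noteq> 0"
  proof
    assume "qa = 0"
    then have eq: "D2 * C1 = D1 * C2" unfolding qa_def by simp
    have cop1: "coprime C1 D1" unfolding C1_def D1_def by (rule hq_coprime)
    have cop2: "coprime C2 D2" unfolding C2_def D2_def by (rule hq_coprime)
    have "C1 dvd D1 * C2" using eq by (metis dvd_triv_right)
    then have d1: "C1 dvd C2" using cop1 coprime_dvd_mult_right_iff by blast
    have "C2 dvd D2 * C1" using eq by (metis dvd_triv_right)
    then have d2: "C2 dvd C1" using cop2 coprime_dvd_mult_right_iff by blast
    have "C1 = C2" using d1 d2 C1p C2p by (simp add: zdvd_antisym_nonneg)
    moreover have "C2 > C1" unfolding C1_def C2_def using hq_strict_mono[OF vb i P] .
    ultimately show False by simp
  qed
  show ?thesis unfolding quadratic_irrational_def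
    using irr poly qa0 unfolding \<eta>_def by blast
qed


definition Kc :: "nat \<Rightarrow> real \<Rightarrow> real \<Rightarrow> real" where
  "Kc n M Y = 4 * real n * Y + 2 * ((Bx n M)^2 * (M + 5)) * Y^2"

lemma Bx_nonneg: "M \<ge> 0 \<Longrightarrow> Bx n M \<ge> 0"
  unfolding Bx_def by simp

lemma choose_d:
  assumes Y: "Y > 0" and e: "\<epsilon> > 0" and M0: "M \<ge> 0"
  shows "\<exists>d>0. d \<le> 1 \<and> d * ((Bx n M)^2 * (M + 5)) \<le> 1 / (2 * Y) \<and> d * Bx n M \<le> 1/2 \<and>
           d * Kc n M Y \<le> \<epsilon>"
proof -
  define B where "B = Bx n M"
  define K1 where "K1 = B^2 * (M + 5)"
  define K where "K = Kc n M Y"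
  have B0: "B \<ge> 0" unfolding B_def using Bx_nonneg[OF M0] .
  have K10: "K1 \<ge> 0" unfolding K1_def using M0 by simp
  have K0: "K \<ge> 0" unfolding K_def Kc_def using Y M0 by simp
  define d where "d = min 1 (min (1 / (2 * Y * (K1 + 1))) (min (1 / (2 * (B + 1))) (\<epsilon> / (K + 1))))"
  have dp: "d > 0" unfolding d_def using Y K10 B0 K0 e by simp
  have d1: "d \<le> 1" unfolding d_def by simp
  have "d * K1 \<le> 1 / (2 * Y)"
  proof -
    have "d \<le> 1 / (2 * Y * (K1 + 1))" unfolding d_def by simp
    then have "d * K1 \<le> 1 / (2 * Y * (K1 + 1)) * K1" using K10 by (rule mult_right_mono)
    also have "\<dots> = 1 / (2 * Y) * (K1 / (K1 + 1))" using Y K10 by (simp add: field_simps)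
    also have "\<dots> \<le> 1 / (2 * Y) * 1" using Y K10 by (intro mult_left_mono) auto
    finally show ?thesis by simp
  qed
  moreover have "d * B \<le> 1/2"
  proof -
    have "d \<le> 1 / (2 * (B + 1))" unfolding d_def by simp
    then have "d * B \<le> 1 / (2 * (B + 1)) * B" using B0 by (rule mult_right_mono)
    also have "\<dots> \<le> 1/2" using B0 by (simp add: field_simps)
    finally show ?thesis .
  qed
  moreover have "d * K \<le> \<epsilon>"
  proof -
    have "d \<le> \<epsilon> / (K + 1)" unfolding d_def by simp
    then have "d * K \<le> \<epsilon> / (K + 1) * K" using K0 by (rule mult_right_mono)
    also have "\<dots> \<le> \<epsilon>" using K0 e by (simp add: field_simps)
    finally show ?thesis .
  qed
  ultimately show ?thesis using dp d1 unfolding B_def K1_def K_def by blast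
qed

lemma quarter_mono: "(1/4::real) ^ (R div 2) \<le> (1/4) ^ ((R - 1) div 2)"
  by (rule power_decreasing) (auto simp: div_le_mono)

definition good_R :: "nat \<Rightarrow> real \<Rightarrow> real \<Rightarrow> real \<Rightarrow> nat \<Rightarrow> bool" where
  "good_R n M Y \<epsilon> R \<longleftrightarrow> R \<ge> 1 \<and> (\<exists>d>0. d \<le> 1 \<and> d * ((Bx n M)^2 * (M + 5)) \<le> 1 / (2 * Y) \<and>
      d * Bx n M \<le> 1/2 \<and> d * Kc n M Y \<le> \<epsilon> \<and> (1/4::real) ^ ((R - 1) div 2) \<le> d)"

lemma good_R_exists:
  assumes "Y > 0" "\<epsilon> > 0" "M \<ge> 0"
  shows "\<exists>R0. \<forall>R\<ge>R0. good_R n M Y \<epsilon> R"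
proof -
  obtain d where d: "d > 0" "d \<le> 1" "d * ((Bx n M)^2 * (M + 5)) \<le> 1 / (2 * Y)" "d * Bx n M \<le> 1/2"
      "d * Kc n M Y \<le> \<epsilon>"
    using choose_d[OF assms] by blast
  obtain R0 where R0: "\<forall>R\<ge>R0. (1/4::real) ^ ((R - 1) div 2) \<le> d" using quarter_small[OF d(1)] by blast
  show ?thesis
  proof (intro exI allI impI)
    fix R assume "R \<ge> max R0 1"
    then show "good_R n M Y \<epsilon> R" unfolding good_R_def using d R0 by auto
  qed
qed

lemma upper_R:
  assumes vb: "valid b" and n: "n > 0" and y: "y \<ge> 1" and M0: "M \<ge> 0" and yY: "y \<le> Y"
    and gR: "good_R n M Y \<epsilon> R" and e1: "\<epsilon> \<le> 1"
    and src: "\<forall>m\<ge>K. \<exists>c p. valid c \<and> agree c p b m R \<and> st n c p = st n b m \<and>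
        real_of_int (c (Suc p)) \<le> M \<and> (\<forall>u v. u + v * beta c p \<ge> 1/2 \<longrightarrow> val n c p u v \<le> y)"
  shows "lambda_n n (cfval b) \<le> ereal (y + \<epsilon>)"
proof -
  obtain d where d: "d > 0" "d \<le> 1" "d * ((Bx n M)^2 * (M + 5)) \<le> 1 / (2 * Y)" "d * Bx n M \<le> 1/2"
      "d * Kc n M Y \<le> \<epsilon>" and dR: "(1/4::real) ^ ((R - 1) div 2) \<le> d" and R1: "R \<ge> 1"
    using gR unfolding good_R_def by blast
  have e0: "\<epsilon> \<ge> 0"
  proof -
    have "Kc n M Y \<ge> 0" unfolding Kc_def using y yY M0 by simp
    then show ?thesis using d(1) d(5) by (smt (verit) mult_nonneg_nonneg)
  qed
  show ?thesis
  proof (rule lam_upper[OF vb n, of "y + \<epsilon>" K M])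
    show "1 \<le> y + \<epsilon>" using y e0 by simp
  next
    fix j assume j: "j \<ge> K"
    then obtain c p where cp: "valid c" "agree c p b j R" "real_of_int (c (Suc p)) \<le> M"
      using src by blast
    have "\<forall>r<R. c (p + 1 + r) = b (j + 1 + r)" using cp(2) unfolding agree_def by blast
    moreover have "(0::nat) < R" using R1 by simp
    ultimately have "c (p + 1 + 0) = b (j + 1 + 0)" by blast
    then have "c (Suc p) = b (Suc j)" by simp
    then show "real_of_int (b (Suc j)) \<le> M" using cp(3) by simp
  next
    fix j u v assume j: "j \<ge> K" and hu: "\<bar>real_of_int u\<bar> \<le> Bx n M" and hv: "\<bar>real_of_int v\<bar> \<le> Bx n M"
      and w: "u + v * beta b j \<ge> 1"
    obtain c p where cp: "valid c" "agree c p b j R" "st n c p = st n b j" "real_of_int (c (Suc p)) \<le> M"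
        "\<forall>u v. u + v * beta c p \<ge> 1/2 \<longrightarrow> val n c p u v \<le> y"
      using src j by blast
    have bc: "\<bar>beta c p - beta b j\<bar> \<le> d"
      using beta_close[OF cp(1) vb cp(2)] quarter_mono[of R] dR by linarith
    have wc: "u + v * beta c p \<ge> 1/2"
      by (rule adm_transfer[OF bc hv d(4)]) (use d w in auto)
    have vc0: "val n c p u v \<le> y" using cp(5) wc by blast
    then have vc: "val n c p u v \<le> Y" using yY by simp
    have wbj: "u + v * beta b j \<ge> 1/2" using w by simp
    note T = transfer_val[OF cp(1) vb n M0 cp(4) cp(2) R1 cp(3) dR d(2) d(3) hu hv wc wbj vc]
    from T have "\<bar>val n b j u v - val n c p u v\<bar> \<le> \<epsilon>" using d(5) unfolding Kc_def by simp
    then show "val n b j u v \<le> y + \<epsilon>" using vc0 by linarith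
  qed
qed

lemma lower_R:
  assumes vb: "valid b" and n: "n > 0" and y: "y - \<epsilon> > 0" and M0: "M \<ge> 0"
    and gR: "good_R n M Y \<epsilon> R"
    and src: "\<And>K. \<exists>m\<ge>K. \<exists>c p u v. valid c \<and> agree c p b m R \<and> st n c p = st n b m \<and>
        real_of_int (c (Suc p)) \<le> M \<and> \<bar>real_of_int u\<bar> \<le> Bx n M \<and> \<bar>real_of_int v\<bar> \<le> Bx n M \<and>
        u + v * beta c p \<ge> 1 \<and> val n c p u v \<ge> y \<and> val n c p u v \<le> Y"
  shows "ereal (y - \<epsilon>) \<le> lambda_n n (cfval b)"
proof -
  obtain d where d: "d > 0" "d \<le> 1" "d * ((Bx n M)^2 * (M + 5)) \<le> 1 / (2 * Y)" "d * Bx n M \<le> 1/2"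
      "d * Kc n M Y \<le> \<epsilon>" and dR: "(1/4::real) ^ ((R - 1) div 2) \<le> d" and R1: "R \<ge> 1"
    using gR unfolding good_R_def by blast
  show ?thesis
  proof (rule lam_lower[OF vb n y])
    fix J
    obtain m c p u v where m: "m \<ge> J" and cp: "valid c" "agree c p b m R" "st n c p = st n b m"
        "real_of_int (c (Suc p)) \<le> M" "\<bar>real_of_int u\<bar> \<le> Bx n M" "\<bar>real_of_int v\<bar> \<le> Bx n M"
        "u + v * beta c p \<ge> 1" "val n c p u v \<ge> y" "val n c p u v \<le> Y"
      using src[of J] by blast
    have "\<bar>beta c p - beta b m\<bar> \<le> d"
      using beta_close[OF cp(1) vb cp(2)] quarter_mono[of R] dR by linarith
    then have bc: "\<bar>beta b m - beta c p\<bar> \<le> d" by (simp add: abs_minus_commute)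
    have wb: "u + v * beta b m \<ge> 1/2"
      by (rule adm_transfer[OF bc cp(6) d(4)]) (use d cp(7) in auto)
    have wc: "u + v * beta c p \<ge> 1/2" using cp(7) by simp
    note T = transfer_val[OF cp(1) vb n M0 cp(4) cp(2) R1 cp(3) dR d(2) d(3) cp(5) cp(6) wc wb cp(9)]
    from T have "\<bar>val n b m u v - val n c p u v\<bar> \<le> \<epsilon>" using d(5) unfolding Kc_def by simp
    then have "val n b m u v \<ge> y - \<epsilon>" using cp(8) by linarith
    then show "\<exists>j\<ge>J. \<exists>u v. u + v * beta b j \<ge> 1/2 \<and> val n b j u v \<ge> y - \<epsilon>"
      using m wb by blast
  qed
qed


fun gE :: "(nat \<Rightarrow> nat) \<Rightarrow> (nat \<Rightarrow> nat) \<Rightarrow> nat \<Rightarrow> nat" where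
  "gE In Out 0 = Out 0"
| "gE In Out (Suc r) = gE In Out r + (Out (Suc r) - In (Suc r))"

definition gseg :: "(nat \<Rightarrow> nat) \<Rightarrow> (nat \<Rightarrow> nat) \<Rightarrow> nat \<Rightarrow> nat" where
  "gseg In Out k = (LEAST r. k \<le> gE In Out r)"

definition gpos :: "(nat \<Rightarrow> nat) \<Rightarrow> (nat \<Rightarrow> nat) \<Rightarrow> nat \<Rightarrow> nat" where
  "gpos In Out k = (if gseg In Out k = 0 then k else k - gE In Out (gseg In Out k - 1) + In (gseg In Out k))"

definition glue :: "(nat \<Rightarrow> nat \<Rightarrow> int) \<Rightarrow> (nat \<Rightarrow> nat) \<Rightarrow> (nat \<Rightarrow> nat) \<Rightarrow> nat \<Rightarrow> int" where
  "glue A In Out k = A (gseg In Out k) (gpos In Out k)"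

definition stepf :: "nat \<Rightarrow> int \<times> int \<Rightarrow> int \<Rightarrow> int \<times> int" where
  "stepf n xy c = ((c * fst xy + snd xy) mod int n, fst xy)"

lemma st_step: "st n a (Suc p) = stepf n (st n a p) (a (Suc p))"
proof -
  have "hq a (Suc (Suc p)) mod int n = (a (Suc p) * (hq a (Suc p) mod int n) + hq a p mod int n) mod int n"
  proof -
    have "hq a (Suc (Suc p)) mod int n = (a (Suc p) * hq a (Suc p) + hq a p) mod int n" by simp
    also have "\<dots> = (a (Suc p) * (hq a (Suc p) mod int n) + hq a p mod int n) mod int n"
      by (rule mod_add_cong) (simp_all add: mod_mult_right_eq)
    finally show ?thesis .
  qed
  then show ?thesis unfolding st_def stepf_def by simp
qed

lemma hq_cong: "(\<And>i. i \<le> k \<Longrightarrow> a i = b i) \<Longrightarrow> hq a (Suc k) = hq b (Suc k) \<and> hq a k = hq b k"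
proof (induction k)
  case 0 then show ?case by simp
next
  case (Suc k)
  then have ih: "hq a (Suc k) = hq b (Suc k) \<and> hq a k = hq b k" by simp
  have "a (Suc k) = b (Suc k)" using Suc.prems by simp
  then show ?case using ih by simp
qed

lemma st_cong: "(\<And>i. i \<le> k \<Longrightarrow> a i = b i) \<Longrightarrow> st n a k = st n b k"
  unfolding st_def using hq_cong by metis

locale gluing =
  fixes In Out :: "nat \<Rightarrow> nat"
  assumes lens: "\<And>r. In (Suc r) < Out (Suc r)"
begin

abbreviation "E \<equiv> gE In Out"

lemma E_Suc_gt: "E r < E (Suc r)"
  using lens[of r] by simp

lemma E_mono: assumes "r \<le> r'" shows "E r \<le> E r'"
  using assms
proof (induction r' rule: dec_induct)
  case (step m)
  then show ?case using E_Suc_gt[of m] by linarith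
qed simp

lemma E_strict: assumes "r < r'" shows "E r < E r'"
proof -
  have "Suc r \<le> r'" using assms by simp
  then have "E (Suc r) \<le> E r'" by (rule E_mono)
  then show ?thesis using E_Suc_gt[of r] by linarith
qed

lemma E_ge: "E r \<ge> r"
proof (induction r)
  case (Suc r)
  then show ?case using E_Suc_gt[of r] by linarith
qed simp

lemma seg_char:
  assumes "r = 0 \<or> E (r - 1) < k" "k \<le> E r"
  shows "gseg In Out k = r"
  unfolding gseg_def
proof (rule Least_equality)
  show "k \<le> E r" by fact
  fix y assume y: "k \<le> E y"
  show "r \<le> y"
  proof (rule ccontr)
    assume "\<not> r \<le> y"
    then have "y \<le> r - 1" "r \<noteq> 0" by auto
    then have "E y \<le> E (r - 1)" using E_mono by blast
    then show False using y assms(1) \<open>r \<noteq> 0\<close> by simp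
  qed
qed

lemma seg0: "k \<le> E 0 \<Longrightarrow> gseg In Out k = 0 \<and> gpos In Out k = k"
  using seg_char[of 0 k] by (simp add: gpos_def)

lemma segS: "E r < k \<Longrightarrow> k \<le> E (Suc r) \<Longrightarrow>
   gseg In Out k = Suc r \<and> gpos In Out k = k - E r + In (Suc r)"
  using seg_char[of "Suc r" k] by (simp add: gpos_def)

lemma seg_exists: "k \<le> E 0 \<or> (\<exists>r. E r < k \<and> k \<le> E (Suc r))"
proof (cases "k \<le> E 0")
  case False
  define r where "r = gseg In Out k"
  have "k \<le> E k" using E_ge[of k] .
  then have kr: "k \<le> E r" unfolding r_def gseg_def by (rule LeastI)
  have r0: "r \<noteq> 0" using kr False by (cases r) auto
  have "\<not> k \<le> E (r - 1)"
  proof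
    assume "k \<le> E (r - 1)"
    then have "r \<le> r - 1" unfolding r_def gseg_def by (rule Least_le)
    then show False using r0 by simp
  qed
  then have "E (r - 1) < k" "k \<le> E (Suc (r - 1))" using kr r0 by auto
  then show ?thesis by blast
qed simp

lemma pos_at_end: "gseg In Out (E r) = r \<and> gpos In Out (E r) = Out r"
proof (cases r)
  case 0 then show ?thesis using seg0[of "E 0"] by simp
next
  case (Suc r')
  have "E r' < E (Suc r')" by (rule E_Suc_gt)
  then show ?thesis using segS[of r' "E (Suc r')"] Suc lens[of r'] by simp
qed

lemma window:
  fixes A :: "nat \<Rightarrow> nat \<Rightarrow> int" and L :: "nat \<Rightarrow> nat"
  assumes mf: "\<And>r e. e < L r \<Longrightarrow> A r (Out r + 1 + e) = A (Suc r) (In (Suc r) + 1 + e)"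
    and mb: "\<And>r e. e < L r \<Longrightarrow> A r (Out r - e) = A (Suc r) (In (Suc r) - e)"
    and k: "E r < k" "k \<le> E (Suc r)"
    and R: "R \<le> L r" "R \<le> L (Suc r)" "R \<le> Out (Suc (Suc r)) - In (Suc (Suc r))"
      "r = 0 \<or> R \<le> Out r - In r" "R \<le> In (Suc r)" "R \<le> k"
  shows "agree (A (Suc r)) (gpos In Out k) (glue A In Out) k R"
proof -
  have pk: "gpos In Out k = k - E r + In (Suc r)" and sk: "gseg In Out k = Suc r" using segS[OF k] by auto
  have OS: "Out (Suc r) = E (Suc r) - E r + In (Suc r)" using lens[of r] by simp
  have fw: "A (Suc r) (gpos In Out k + 1 + e) = glue A In Out (k + 1 + e)" if e: "e < R" for e
  proof (cases "k + 1 + e \<le> E (Suc r)")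
    case True
    then have hs: "gseg In Out (k + 1 + e) = Suc r" and hp: "gpos In Out (k + 1 + e) = k + 1 + e - E r + In (Suc r)"
      using segS[of r "k + 1 + e"] k by auto
    have "glue A In Out (k + 1 + e) = A (Suc r) (k + 1 + e - E r + In (Suc r))" unfolding glue_def hs hp ..
    also have "k + 1 + e - E r + In (Suc r) = gpos In Out k + 1 + e" unfolding pk using k(1) by arith
    finally show ?thesis by simp
  next
    case False
    define e2 where "e2 = k + e - E (Suc r)"
    have e2R: "e2 < R" unfolding e2_def using k e by simp
    have "k + 1 + e \<le> E (Suc (Suc r))" using R(3) e k False lens[of "Suc r"] by simp
    then have hs: "gseg In Out (k + 1 + e) = Suc (Suc r)" and
        hp: "gpos In Out (k + 1 + e) = k + 1 + e - E (Suc r) + In (Suc (Suc r))"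
      using segS[of "Suc r" "k + 1 + e"] False by auto
    have "glue A In Out (k + 1 + e) = A (Suc (Suc r)) (k + 1 + e - E (Suc r) + In (Suc (Suc r)))"
      unfolding glue_def hs hp ..
    also have "k + 1 + e - E (Suc r) + In (Suc (Suc r)) = In (Suc (Suc r)) + 1 + e2"
      unfolding e2_def using False by arith
    finally have "glue A In Out (k + 1 + e) = A (Suc (Suc r)) (In (Suc (Suc r)) + 1 + e2)" .
    also have "\<dots> = A (Suc r) (Out (Suc r) + 1 + e2)" using mf[of e2 "Suc r"] e2R R(2) by simp
    also have "Out (Suc r) + 1 + e2 = gpos In Out k + 1 + e"
      unfolding pk OS e2_def using k False by simp
    finally show ?thesis by simp
  qed
  have bw: "A (Suc r) (gpos In Out k - e) = glue A In Out (k - e)" if e: "e < R" for e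
  proof (cases "E r < k - e")
    case True
    then have hs: "gseg In Out (k - e) = Suc r" and hp: "gpos In Out (k - e) = k - e - E r + In (Suc r)"
      using segS[of r "k - e"] k by auto
    have "glue A In Out (k - e) = A (Suc r) (k - e - E r + In (Suc r))" unfolding glue_def hs hp ..
    also have "k - e - E r + In (Suc r) = gpos In Out k - e" unfolding pk using True by arith
    finally show ?thesis by simp
  next
    case False
    define e1 where "e1 = E r - (k - e)"
    have e1R: "e1 < R" unfolding e1_def using k e R(6) by simp
    have ke: "k - e \<le> E r" using False by simp
    have gl: "glue A In Out (k - e) = A r (Out r - e1)"
    proof (cases r)
      case 0
      then show ?thesis using seg0[of "k - e"] ke unfolding glue_def e1_def by simp
    next
      case (Suc r')
      have len: "E r - E r' = Out r - In r" using Suc lens[of r'] by simp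
      have "R \<le> Out r - In r" using R(4) Suc by simp
      then have f2: "e1 + E r' < E r" using e1R len by linarith
      have f1: "e1 + (k - e) = E r" unfolding e1_def using ke by simp
      have "E r' < k - e" using f1 f2 by linarith
      then have "gseg In Out (k - e) = Suc r' \<and> gpos In Out (k - e) = k - e - E r' + In (Suc r')"
        using segS[of r' "k - e"] ke Suc by simp
      moreover have "k - e - E r' + In (Suc r') = Out r - e1"
        unfolding e1_def using Suc lens[of r'] ke \<open>E r' < k - e\<close> by simp
      ultimately show ?thesis unfolding glue_def using Suc by simp
    qed
    have "A r (Out r - e1) = A (Suc r) (In (Suc r) - e1)" using mb[of e1 r] e1R R(1) by simp
    moreover have "In (Suc r) - e1 = gpos In Out k - e"
    proof -
      have f1: "e1 + k = E r + e" unfolding e1_def using ke e R(6) by simp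
      have f2: "e1 < In (Suc r)" using e1R R(5) by simp
      show ?thesis unfolding pk using f1 f2 k(1) by arith
    qed
    ultimately show ?thesis using gl by simp
  qed
  have "R \<le> gpos In Out k" unfolding pk using R(5) by simp
  then show ?thesis unfolding agree_def using fw bw R(6) by auto
qed

lemma glue_state:
  fixes A :: "nat \<Rightarrow> nat \<Rightarrow> int"
  assumes mst: "\<And>r. st n (A r) (Out r) = st n (A (Suc r)) (In (Suc r))"
  shows "st n (glue A In Out) k = st n (A (gseg In Out k)) (gpos In Out k)"
proof (induction k)
  case 0
  have "gseg In Out 0 = 0 \<and> gpos In Out 0 = 0" using seg0[of 0] by simp
  then show ?case unfolding st_def glue_def by simp
next
  case (Suc k)
  show ?case
  proof (cases "Suc k \<le> E 0")
    case True
    have "glue A In Out i = A 0 i" if "i \<le> Suc k" for i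
      using seg0[of i] that True unfolding glue_def by simp
    then have "st n (glue A In Out) (Suc k) = st n (A 0) (Suc k)" by (rule st_cong)
    then show ?thesis using seg0[OF True] by simp
  next
    case False
    then obtain r where r: "E r < Suc k" "Suc k \<le> E (Suc r)" using seg_exists[of "Suc k"] by blast
    have sS: "gseg In Out (Suc k) = Suc r" and pS: "gpos In Out (Suc k) = Suc k - E r + In (Suc r)"
      using segS[OF r] by auto
    have gS: "glue A In Out (Suc k) = A (Suc r) (Suc k - E r + In (Suc r))"
      unfolding glue_def sS pS ..
    have st1: "st n (glue A In Out) (Suc k) = stepf n (st n (A (gseg In Out k)) (gpos In Out k)) (glue A In Out (Suc k))"
      using st_step[of n "glue A In Out" k] Suc.IH by simp
    show ?thesis
    proof (cases "E r < k")
      case True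
      have "gseg In Out k = Suc r" and pk: "gpos In Out k = k - E r + In (Suc r)"
        using segS[of r k] True r by auto
      moreover have "Suc k - E r + In (Suc r) = Suc (k - E r + In (Suc r))" using True by arith
      ultimately show ?thesis unfolding st1 gS sS pS using st_step[of n "A (Suc r)" "k - E r + In (Suc r)"]
        by simp
    next
      case False
      then have kE: "k = E r" using r by simp
      have e: "gseg In Out k = r" "gpos In Out k = Out r" using pos_at_end[of r] kE by auto
      have "Suc k - E r + In (Suc r) = Suc (In (Suc r))" using kE by simp
      then show ?thesis unfolding st1 gS sS pS e mst
        using st_step[of n "A (Suc r)" "In (Suc r)"] by simp
    qed
  qed
qed

lemma glue_valid:
  assumes "\<And>r. valid (A r)"
  shows "valid (glue A In Out)"
  unfolding valid_def
proof (intro allI impI)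
  fix k :: nat assume k: "k \<ge> 1"
  show "glue A In Out k \<ge> 1"
  proof (cases "k \<le> E 0")
    case True
    then show ?thesis using seg0[OF True] validD[OF assms k] unfolding glue_def by simp
  next
    case False
    then obtain r where r: "E r < k" "k \<le> E (Suc r)" using seg_exists[of k] by blast
    then have "gseg In Out k = Suc r" "gpos In Out k = k - E r + In (Suc r)" using segS by auto
    moreover have "k - E r + In (Suc r) \<ge> 1" using r by simp
    ultimately show ?thesis using validD[OF assms] unfolding glue_def by simp
  qed
qed

end


definition sig :: "nat \<Rightarrow> nat \<Rightarrow> (nat \<Rightarrow> int) \<Rightarrow> nat \<Rightarrow> int list \<times> int list \<times> (int \<times> int)" where
  "sig n L a p = (map (\<lambda>e. a (p + 1 + e)) [0..<L], map (\<lambda>e. a (p - e)) [0..<L], st n a p)"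

lemma sig_eqD:
  assumes "sig n L a p = sig n L b q"
  shows "(\<forall>e<L. a (p + 1 + e) = b (q + 1 + e)) \<and> (\<forall>e<L. a (p - e) = b (q - e)) \<and> st n a p = st n b q"
proof -
  have m1: "map (\<lambda>e. a (p + 1 + e)) [0..<L] = map (\<lambda>e. b (q + 1 + e)) [0..<L]"
    and m2: "map (\<lambda>e. a (p - e)) [0..<L] = map (\<lambda>e. b (q - e)) [0..<L]"
    and s: "st n a p = st n b q" using assms unfolding sig_def by auto
  have "\<forall>e<L. a (p + 1 + e) = b (q + 1 + e)"
  proof (intro allI impI)
    fix e assume "e < L"
    then show "a (p + 1 + e) = b (q + 1 + e)" using arg_cong[OF m1, of "\<lambda>xs. xs ! e"] by simp
  qed
  moreover have "\<forall>e<L. a (p - e) = b (q - e)"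
  proof (intro allI impI)
    fix e assume "e < L"
    then show "a (p - e) = b (q - e)" using arg_cong[OF m2, of "\<lambda>xs. xs ! e"] by simp
  qed
  ultimately show ?thesis using s by blast
qed

lemma st_range: "n > 0 \<Longrightarrow> st n a p \<in> {0..<int n} \<times> {0..<int n}"
  unfolding st_def by simp

lemma sig_finite:
  assumes n: "n > 0" and dg: "\<And>p e. p \<in> S \<Longrightarrow> e < L \<Longrightarrow> a (p + 1 + e) \<in> {1..Mi} \<and> a (p - e) \<in> {1..Mi}"
  shows "finite (sig n L a ` S)"
proof -
  define W where "W = {xs. set xs \<subseteq> {1..Mi} \<and> length xs = L}"
  have fW: "finite W" unfolding W_def using finite_lists_length_eq[of "{1..Mi}" L] by simp
  have "sig n L a ` S \<subseteq> W \<times> W \<times> ({0..<int n} \<times> {0..<int n})"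
  proof
    fix z assume "z \<in> sig n L a ` S"
    then obtain p where p: "p \<in> S" "z = sig n L a p" by blast
    have "map (\<lambda>e. a (p + 1 + e)) [0..<L] \<in> W" unfolding W_def using dg[OF p(1)] by auto
    moreover have "map (\<lambda>e. a (p - e)) [0..<L] \<in> W" unfolding W_def using dg[OF p(1)] by auto
    moreover have "st n a p \<in> {0..<int n} \<times> {0..<int n}" using st_range[OF n] .
    ultimately show "z \<in> W \<times> W \<times> ({0..<int n} \<times> {0..<int n})" unfolding p(2) sig_def by simp
  qed
  moreover have "finite (W \<times> W \<times> ({0..<int n} \<times> {0..<int n}))" using fW by simp
  ultimately show ?thesis by (rule finite_subset)
qed

lemma inf_pair:
  fixes S :: "nat set"
  assumes "infinite S" "finite (f ` S)"
  shows "\<exists>i\<in>S. \<forall>K. \<exists>j\<in>S. j \<ge> K \<and> f j = f i"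
proof -
  obtain i where i: "i \<in> S" "infinite {a\<in>S. f a = f i}" using pigeonhole_infinite[OF assms] by blast
  have "\<forall>K. \<exists>j\<in>S. j \<ge> K \<and> f j = f i"
  proof
    fix K
    obtain j where "j \<ge> K" "j \<in> {a\<in>S. f a = f i}" using i(2) unfolding infinite_nat_iff_unbounded_le by blast
    then show "\<exists>j\<in>S. j \<ge> K \<and> f j = f i" by blast
  qed
  then show ?thesis using i(1) by blast
qed


lemma const_gluing: "i < j \<Longrightarrow> gluing (\<lambda>_. i) (\<lambda>_. j)"
  by (unfold_locales) simp

lemma gE_const: "gE (\<lambda>_. i) (\<lambda>_. j) r = j + r * (j - i)"
  by (induction r) auto

lemma glue_periodic:
  assumes ij: "i < j" and k: "k > j"
  shows "glue (\<lambda>_. a) (\<lambda>_. i) (\<lambda>_. j) (k + (j - i)) = glue (\<lambda>_. a) (\<lambda>_. i) (\<lambda>_. j) k"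
proof -
  interpret g: gluing "\<lambda>_. i" "\<lambda>_. j" using const_gluing[OF ij] .
  obtain r where r: "gE (\<lambda>_. i) (\<lambda>_. j) r < k" "k \<le> gE (\<lambda>_. i) (\<lambda>_. j) (Suc r)"
    using g.seg_exists[of k] k by auto
  have r2: "gE (\<lambda>_. i) (\<lambda>_. j) (Suc r) < k + (j - i)" "k + (j - i) \<le> gE (\<lambda>_. i) (\<lambda>_. j) (Suc (Suc r))"
    using r ij by auto
  have p1: "gpos (\<lambda>_. i) (\<lambda>_. j) k = k - gE (\<lambda>_. i) (\<lambda>_. j) r + i" using g.segS[OF r] by simp
  have p2: "gpos (\<lambda>_. i) (\<lambda>_. j) (k + (j - i)) = k + (j - i) - gE (\<lambda>_. i) (\<lambda>_. j) (Suc r) + i"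
    using g.segS[OF r2] by simp
  have "k + (j - i) - gE (\<lambda>_. i) (\<lambda>_. j) (Suc r) = k - gE (\<lambda>_. i) (\<lambda>_. j) r"
    using r(1) ij by simp
  then show ?thesis unfolding glue_def p1 p2 by simp
qed

lemma dirA:
  assumes n: "n > 0" and xi: "\<xi> \<notin> \<rat>" and lam: "lambda_n n \<xi> = ereal x" and e: "e > 0"
  shows "\<exists>\<eta> x'. quadratic_irrational \<eta> \<and> lambda_n n \<eta> = ereal x' \<and> \<bar>x' - x\<bar> < e"
proof -
  define \<epsilon> where "\<epsilon> = min (1/4) (e / 3)"
  have ep: "\<epsilon> > 0" "\<epsilon> \<le> 1/4" "3 * \<epsilon> \<le> e" unfolding \<epsilon>_def using e by auto
  obtain a where va: "valid a" and ax: "cfval a = \<xi>" using exists_cf[OF xi] by blast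
  have lam': "lambda_n n (cfval a) = ereal x" using lam ax by simp
  have x1: "x \<ge> 1" using lam_ge1[OF va n] lam' by simp
  obtain J0 where J0: "\<forall>j\<ge>J0. real_of_int (a (Suc j)) \<le> x + 1" using digits_bounded[OF va n lam'] by blast
  define M where "M = x + 1"
  have M0: "M \<ge> 0" unfolding M_def using x1 by simp
  define Y where "Y = x + 2"
  have Yp: "Y > 0" unfolding Y_def using x1 by simp
  obtain R0 where R0: "\<forall>R\<ge>R0. good_R n M Y \<epsilon> R" using good_R_exists[OF Yp ep(1) M0] by blast
  define R where "R = max R0 1"
  have gR: "good_R n M Y \<epsilon> R" using R0 unfolding R_def by simp
  have R1: "R \<ge> 1" unfolding R_def by simp
  have "lambda_n n (cfval a) < ereal (x + \<epsilon>)" using lam' ep by simp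
  then obtain J1 where J1: "\<forall>j\<ge>J1. \<forall>u v. u + v * beta a j \<ge> 1/2 \<longrightarrow> val n a j u v < x + \<epsilon>"
    using lam_upper_D[OF va n] x1 ep by fastforce
  have "ereal (x - \<epsilon>) < lambda_n n (cfval a)" using lam' ep by simp
  then have nm: "\<And>J. \<exists>j\<ge>J. \<exists>u v. \<bar>real_of_int u\<bar> \<le> Bx n M \<and> \<bar>real_of_int v\<bar> \<le> Bx n M \<and>
           u + v * beta a j \<ge> 1 \<and> val n a j u v > x - \<epsilon>"
    using lam_lower_D[OF va n _ _ ] J0 x1 ep unfolding M_def by force
  define p0 where "p0 = J0 + J1 + 2 * R + 2"
  define N where "N = {j. j \<ge> p0 \<and> (\<exists>u v. \<bar>real_of_int u\<bar> \<le> Bx n M \<and> \<bar>real_of_int v\<bar> \<le> Bx n M \<and>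
           u + v * beta a j \<ge> 1 \<and> val n a j u v > x - \<epsilon>)}"
  have infN: "infinite N" unfolding infinite_nat_iff_unbounded_le
  proof
    fix m
    obtain j where "j \<ge> max m p0" "\<exists>u v. \<bar>real_of_int u\<bar> \<le> Bx n M \<and> \<bar>real_of_int v\<bar> \<le> Bx n M \<and>
           u + v * beta a j \<ge> 1 \<and> val n a j u v > x - \<epsilon>" using nm by blast
    then show "\<exists>j\<ge>m. j \<in> N" unfolding N_def by auto
  qed
  have finS: "finite (sig n R a ` N)"
  proof (rule sig_finite[OF n, where Mi = "\<lfloor>M\<rfloor>"])
    fix p e assume p: "p \<in> N" and e: "e < R"
    have pp: "p \<ge> p0" using p unfolding N_def by simp
    have d1: "a (p + 1 + e) \<ge> 1" "a (p - e) \<ge> 1" using validD[OF va] pp e unfolding p0_def by auto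
    have "real_of_int (a (Suc (p + e))) \<le> M" using J0 pp unfolding p0_def M_def by simp
    moreover have "real_of_int (a (Suc (p - e - 1))) \<le> M" using J0 pp e unfolding p0_def M_def by simp
    moreover have "Suc (p - e - 1) = p - e" using pp e unfolding p0_def by simp
    ultimately have "a (p + 1 + e) \<le> \<lfloor>M\<rfloor>" "a (p - e) \<le> \<lfloor>M\<rfloor>" by (simp_all add: le_floor_iff)
    then show "a (p + 1 + e) \<in> {1..\<lfloor>M\<rfloor>} \<and> a (p - e) \<in> {1..\<lfloor>M\<rfloor>}" using d1 by simp
  qed
  obtain i where iN: "i \<in> N" and ij: "\<forall>K. \<exists>j\<in>N. j \<ge> K \<and> sig n R a j = sig n R a i"
    using inf_pair[OF infN finS] by blast
  obtain j where jN: "j \<in> N" and ji: "j \<ge> i + R + 1" and sg: "sig n R a j = sig n R a i"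
    using ij by blast
  have ip: "i \<ge> p0" using iN unfolding N_def by simp
  have ijl: "i < j" using ji by simp
  define P where "P = j - i"
  have P1: "P \<ge> R + 1" unfolding P_def using ji by simp
  have mt: "\<forall>e<R. a (j + 1 + e) = a (i + 1 + e)" "\<forall>e<R. a (j - e) = a (i - e)" "st n a j = st n a i"
    using sig_eqD[OF sg] by auto
  define b where "b = glue (\<lambda>_. a) (\<lambda>_. i) (\<lambda>_. j)"
  interpret g: gluing "\<lambda>_. i" "\<lambda>_. j" using const_gluing[OF ijl] .
  have vb: "valid b" unfolding b_def by (rule g.glue_valid) (use va in simp)
  have quad: "quadratic_irrational (cfval b)"
  proof (rule periodic_quadratic[OF vb, of P j])
    show "P \<ge> 1" using P1 by simp
    show "j \<ge> 1" using ijl by simp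
    fix k assume "k > j"
    then show "b (k + P) = b k" unfolding b_def P_def by (rule glue_periodic[OF ijl])
  qed
  have stb: "st n b k = st n a (gpos (\<lambda>_. i) (\<lambda>_. j) k)" for k
    unfolding b_def using g.glue_state[of n "\<lambda>_. a"] mt(3) by simp
  have win: "agree a (gpos (\<lambda>_. i) (\<lambda>_. j) k) b k R"
    if "gE (\<lambda>_. i) (\<lambda>_. j) r < k" "k \<le> gE (\<lambda>_. i) (\<lambda>_. j) (Suc r)" for r k
  proof -
    have "agree ((\<lambda>_. a) (Suc r)) (gpos (\<lambda>_. i) (\<lambda>_. j) k) (glue (\<lambda>_. a) (\<lambda>_. i) (\<lambda>_. j)) k R"
    proof (rule g.window[where L = "\<lambda>_. R"])
      show "\<And>r e. e < R \<Longrightarrow> a (j + 1 + e) = a (i + 1 + e)" using mt(1) by blast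
      show "\<And>r e. e < R \<Longrightarrow> a (j - e) = a (i - e)" using mt(2) by blast
      show "gE (\<lambda>_. i) (\<lambda>_. j) r < k" "k \<le> gE (\<lambda>_. i) (\<lambda>_. j) (Suc r)" by fact+
      show "R \<le> R" "R \<le> R" by simp_all
      show "R \<le> j - i" using P1 unfolding P_def by simp
      show "r = 0 \<or> R \<le> j - i" using P1 unfolding P_def by simp
      show "R \<le> i" using ip unfolding p0_def by simp
      have "k > j" using that(1) gE_const[of i j r] by simp
      then show "R \<le> k" using ip ijl unfolding p0_def by simp
    qed
    then show ?thesis unfolding b_def by simp
  qed
  have posb: "gpos (\<lambda>_. i) (\<lambda>_. j) k > i" if "gE (\<lambda>_. i) (\<lambda>_. j) r < k" "k \<le> gE (\<lambda>_. i) (\<lambda>_. j) (Suc r)" for r k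
    using g.segS[OF that] that(1) by simp
  have up: "lambda_n n (cfval b) \<le> ereal (x + \<epsilon> + \<epsilon>)"
  proof (rule upper_R[OF vb n _ M0 _ gR])
    show "1 \<le> x + \<epsilon>" using x1 ep by simp
    show "x + \<epsilon> \<le> Y" unfolding Y_def using ep by simp
    show "\<epsilon> \<le> 1" using ep by simp
    show "\<forall>m\<ge>Suc j. \<exists>c p. valid c \<and> agree c p b m R \<and> st n c p = st n b m \<and>
        real_of_int (c (Suc p)) \<le> M \<and> (\<forall>u v. u + v * beta c p \<ge> 1/2 \<longrightarrow> val n c p u v \<le> x + \<epsilon>)"
    proof (intro allI impI)
      fix m assume m: "m \<ge> Suc j"
      then obtain r where r: "gE (\<lambda>_. i) (\<lambda>_. j) r < m" "m \<le> gE (\<lambda>_. i) (\<lambda>_. j) (Suc r)"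
        using g.seg_exists[of m] by auto
      define p where "p = gpos (\<lambda>_. i) (\<lambda>_. j) m"
      have pi: "p > i" unfolding p_def using posb[OF r] .
      have "real_of_int (a (Suc p)) \<le> M" using J0 pi ip unfolding p0_def M_def by simp
      moreover have "\<forall>u v. u + v * beta a p \<ge> 1/2 \<longrightarrow> val n a p u v \<le> x + \<epsilon>"
      proof (intro allI impI)
        fix u v :: int assume "u + v * beta a p \<ge> 1/2"
        moreover have "p \<ge> J1" using pi ip unfolding p0_def by simp
        ultimately have "val n a p u v < x + \<epsilon>" using J1 by blast
        then show "val n a p u v \<le> x + \<epsilon>" by simp
      qed
      ultimately show "\<exists>c p. valid c \<and> agree c p b m R \<and> st n c p = st n b m \<and>
        real_of_int (c (Suc p)) \<le> M \<and> (\<forall>u v. u + v * beta c p \<ge> 1/2 \<longrightarrow> val n c p u v \<le> x + \<epsilon>)"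
        using va win[OF r] stb[of m, symmetric] unfolding p_def by blast
    qed
  qed
  have lo: "ereal (x - \<epsilon> - \<epsilon>) \<le> lambda_n n (cfval b)"
  proof (rule lower_R[OF vb n _ M0 gR])
    show "x - \<epsilon> - \<epsilon> > 0" using x1 ep by simp
    fix K
    obtain u v where uv: "\<bar>real_of_int u\<bar> \<le> Bx n M" "\<bar>real_of_int v\<bar> \<le> Bx n M"
        "u + v * beta a j \<ge> 1" "val n a j u v > x - \<epsilon>"
      using jN unfolding N_def by blast
    have jJ1: "j \<ge> J1" using ip ijl unfolding p0_def by simp
    have "u + v * beta a j \<ge> 1/2" using uv(3) by simp
    then have "val n a j u v < x + \<epsilon>" using J1 jJ1 by blast
    then have vY: "val n a j u v \<le> Y" unfolding Y_def using ep by simp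
    define m where "m = gE (\<lambda>_. i) (\<lambda>_. j) (Suc K)"
    have mK: "m \<ge> K" unfolding m_def using g.E_ge[of "Suc K"] by simp
    have r: "gE (\<lambda>_. i) (\<lambda>_. j) K < m" "m \<le> gE (\<lambda>_. i) (\<lambda>_. j) (Suc K)"
      unfolding m_def using g.E_Suc_gt by auto
    have pm: "gpos (\<lambda>_. i) (\<lambda>_. j) m = j" unfolding m_def by (rule conjunct2[OF g.pos_at_end])
    have "real_of_int (a (Suc j)) \<le> M" using J0 ip ijl unfolding p0_def M_def by simp
    then show "\<exists>m\<ge>K. \<exists>c p u v. valid c \<and> agree c p b m R \<and> st n c p = st n b m \<and>
        real_of_int (c (Suc p)) \<le> M \<and> \<bar>real_of_int u\<bar> \<le> Bx n M \<and> \<bar>real_of_int v\<bar> \<le> Bx n M \<and>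
        u + v * beta c p \<ge> 1 \<and> val n c p u v \<ge> x - \<epsilon> \<and> val n c p u v \<le> Y"
    proof -
      have ag: "agree a j b m R" using win[OF r] pm by simp
      have sj: "st n a j = st n b m" using stb[of m] pm by simp
      have ge: "val n a j u v \<ge> x - \<epsilon>" using uv(4) by simp
      show ?thesis using mK va ag sj \<open>real_of_int (a (Suc j)) \<le> M\<close> uv(1,2,3) ge vY by blast
    qed
  qed
  obtain x' where x': "lambda_n n (cfval b) = ereal x'"
    using up lo by (cases "lambda_n n (cfval b)") auto
  have "x' \<le> x + 2 * \<epsilon>" "x' \<ge> x - 2 * \<epsilon>" using up lo x' by auto
  then have "\<bar>x' - x\<bar> < e" using ep by linarith
  then show ?thesis using quad x' by blast
qed


definition NX :: "(nat \<Rightarrow> 's \<Rightarrow> nat set) \<Rightarrow> nat set \<Rightarrow> nat \<Rightarrow> 's" where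
  "NX G I L = (SOME s. infinite (I \<inter> G L s))"

fun Iseq :: "(nat \<Rightarrow> 's \<Rightarrow> nat set) \<Rightarrow> nat \<Rightarrow> nat set" where
  "Iseq G 0 = UNIV \<inter> G 0 (NX G UNIV 0)"
| "Iseq G (Suc L) = Iseq G L \<inter> G (Suc L) (NX G (Iseq G L) (Suc L))"

fun sseq :: "(nat \<Rightarrow> 's \<Rightarrow> nat set) \<Rightarrow> nat \<Rightarrow> 's" where
  "sseq G 0 = NX G UNIV 0"
| "sseq G (Suc L) = NX G (Iseq G L) (Suc L)"

fun kseq :: "(nat \<Rightarrow> 's \<Rightarrow> nat set) \<Rightarrow> nat \<Rightarrow> nat" where
  "kseq G 0 = (LEAST k. k \<in> Iseq G 0)"
| "kseq G (Suc L) = (LEAST k. k \<in> Iseq G (Suc L) \<and> k > kseq G L)"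

lemma nested_choice:
  fixes G :: "nat \<Rightarrow> 's \<Rightarrow> nat set"
  assumes ex: "\<And>I L. infinite I \<Longrightarrow> \<exists>s. infinite (I \<inter> G L s)"
  shows "strict_mono (kseq G) \<and> (\<forall>L. kseq G L \<in> G L (sseq G L)) \<and> (\<forall>L. kseq G (Suc L) \<in> G L (sseq G L))"
proof -
  have nx: "infinite (I \<inter> G L (NX G I L))" if "infinite I" for I L
    unfolding NX_def using ex[OF that, of L] by (rule someI_ex)
  have inf: "infinite (Iseq G L)" for L
  proof (induction L)
    case 0 then show ?case using nx[of UNIV 0] by simp
  next
    case (Suc L) then show ?case using nx[of "Iseq G L" "Suc L"] by simp
  qed
  have sub: "Iseq G L \<subseteq> G L (sseq G L)" for L by (cases L) auto
  have sub2: "Iseq G (Suc L) \<subseteq> Iseq G L" for L by auto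
  have kin: "kseq G L \<in> Iseq G L \<and> (L > 0 \<longrightarrow> kseq G L > kseq G (L - 1))" for L
  proof (cases L)
    case 0
    obtain k where "k \<in> Iseq G 0" using inf[of 0] by (metis finite.emptyI ex_in_conv)
    then have "(LEAST k. k \<in> Iseq G 0) \<in> Iseq G 0" by (rule LeastI)
    then show ?thesis using 0 by simp
  next
    case (Suc L')
    obtain k where kk: "k \<in> Iseq G (Suc L') \<and> k > kseq G L'"
      using inf[of "Suc L'"] unfolding infinite_nat_iff_unbounded by blast
    have "(LEAST k. k \<in> Iseq G (Suc L') \<and> k > kseq G L') \<in> Iseq G (Suc L') \<and>
        (LEAST k. k \<in> Iseq G (Suc L') \<and> k > kseq G L') > kseq G L'"
      by (rule LeastI[where P = "\<lambda>k. k \<in> Iseq G (Suc L') \<and> k > kseq G L'", OF kk])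
    then have "kseq G (Suc L') \<in> Iseq G (Suc L') \<and> kseq G (Suc L') > kseq G L'"
      by (simp only: kseq.simps)
    then show ?thesis using Suc by simp
  qed
  have sm: "strict_mono (kseq G)"
    by (rule strict_monoI_Suc) (use kin in force)
  have a1: "\<forall>L. kseq G L \<in> G L (sseq G L)" using kin sub by blast
  have a2: "\<forall>L. kseq G (Suc L) \<in> G L (sseq G L)" using kin[of "Suc L" for L] sub sub2 by blast
  show ?thesis using sm a1 a2 by blast
qed


lemma ereal_le_from_eps:
  assumes "\<And>\<epsilon>. 0 < \<epsilon> \<Longrightarrow> \<epsilon> \<le> 1/8 \<Longrightarrow> z \<le> ereal (x + \<epsilon>)"
  shows "z \<le> ereal x"
proof (rule ccontr)
  assume "\<not> z \<le> ereal x"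
  then have "ereal x < z" by simp
  then obtain r where r: "ereal x < ereal r" "ereal r < z" using ereal_dense2 by blast
  define \<epsilon> where "\<epsilon> = min (1/8) ((r - x) / 4)"
  have ep: "\<epsilon> > 0" "\<epsilon> \<le> 1/8" unfolding \<epsilon>_def using r by auto
  have "\<epsilon> \<le> (r - x) / 4" unfolding \<epsilon>_def by (rule min.cobounded2)
  then have "4 * \<epsilon> \<le> r - x" by (simp add: field_simps)
  moreover have "x < r" using r by simp
  ultimately have "x + \<epsilon> < r" by linarith
  then have "ereal (x + \<epsilon>) < ereal r" by simp
  then have "z < ereal r" using assms[OF ep] by (rule le_less_trans[rotated])
  then show False using r by simp
qed

lemma ereal_ge_from_eps:
  assumes "\<And>\<epsilon>. 0 < \<epsilon> \<Longrightarrow> \<epsilon> \<le> 1/8 \<Longrightarrow> ereal (x - \<epsilon>) \<le> z"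
  shows "ereal x \<le> z"
proof (rule ccontr)
  assume "\<not> ereal x \<le> z"
  then have "z < ereal x" by simp
  then obtain r where r: "z < ereal r" "ereal r < ereal x" using ereal_dense2 by blast
  define \<epsilon> where "\<epsilon> = min (1/8) ((x - r) / 4)"
  have ep: "\<epsilon> > 0" "\<epsilon> \<le> 1/8" unfolding \<epsilon>_def using r by auto
  have "\<epsilon> \<le> (x - r) / 4" unfolding \<epsilon>_def by (rule min.cobounded2)
  then have "4 * \<epsilon> \<le> x - r" by (simp add: field_simps)
  moreover have "r < x" using r by simp
  ultimately have "r < x - \<epsilon>" by linarith
  then have "ereal r < ereal (x - \<epsilon>)" by simp
  then have "ereal r < z" using assms[OF ep] by (rule less_le_trans)
  then show False using r by simp
qed

definition Sfin :: "nat \<Rightarrow> real \<Rightarrow> nat \<Rightarrow> (int list \<times> int list \<times> (int \<times> int)) set" where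
  "Sfin n M L = {xs. set xs \<subseteq> {1..\<lfloor>M\<rfloor>} \<and> length xs = L} \<times> {xs. set xs \<subseteq> {1..\<lfloor>M\<rfloor>} \<and> length xs = L} \<times>
                ({0..<int n} \<times> {0..<int n})"

lemma Sfin_finite: "finite (Sfin n M L)"
  unfolding Sfin_def using finite_lists_length_eq[of "{1..\<lfloor>M\<rfloor>}" L] by simp

lemma sig_in_Sfin:
  assumes n: "n > 0" and va: "valid a" and T: "\<And>j. j \<ge> T \<Longrightarrow> real_of_int (a (Suc j)) \<le> M"
    and p: "p \<ge> T + L"
  shows "sig n L a p \<in> Sfin n M L"
proof -
  have dg: "a (p + 1 + e) \<in> {1..\<lfloor>M\<rfloor>} \<and> a (p - e) \<in> {1..\<lfloor>M\<rfloor>}" if e: "e < L" for e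
  proof -
    have d1: "a (p + 1 + e) \<ge> 1" "a (p - e) \<ge> 1" using validD[OF va] p e by auto
    have "real_of_int (a (Suc (p + e))) \<le> M" using T p by simp
    moreover have "real_of_int (a (Suc (p - e - 1))) \<le> M" using T p e by simp
    moreover have "Suc (p - e - 1) = p - e" using p e by simp
    ultimately have "a (p + 1 + e) \<le> \<lfloor>M\<rfloor>" "a (p - e) \<le> \<lfloor>M\<rfloor>" by (simp_all add: le_floor_iff)
    then show ?thesis using d1 by simp
  qed
  show ?thesis unfolding Sfin_def sig_def using dg st_range[OF n, of a p] by auto
qed

locale bctx =
  fixes n :: nat and x :: real and aa :: "nat \<Rightarrow> nat \<Rightarrow> int" and xs :: "nat \<Rightarrow> real" and TT :: "nat \<Rightarrow> nat"
  assumes n: "n > 0" and x1: "x \<ge> 1"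
    and va: "\<And>k. valid (aa k)"
    and xs: "\<And>k. \<bar>xs k - x\<bar> < 1 / (real k + 2)"
    and dig: "\<And>k j. j \<ge> TT k \<Longrightarrow> real_of_int (aa k (Suc j)) \<le> x + 3"
    and upb: "\<And>k j u v. j \<ge> TT k \<Longrightarrow> u + v * beta (aa k) j \<ge> 1/2 \<Longrightarrow> val n (aa k) j u v < xs k + 1 / (real k + 2)"
    and nm: "\<And>k J. \<exists>p\<ge>J. \<exists>u v. \<bar>real_of_int u\<bar> \<le> Bx n (x + 3) \<and> \<bar>real_of_int v\<bar> \<le> Bx n (x + 3) \<and>
               u + v * beta (aa k) p \<ge> 1 \<and> val n (aa k) p u v > xs k - 1 / (real k + 2)"
begin

definition NM :: "nat \<Rightarrow> nat \<Rightarrow> bool" where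
  "NM k p \<longleftrightarrow> (\<exists>u v. \<bar>real_of_int u\<bar> \<le> Bx n (x + 3) \<and> \<bar>real_of_int v\<bar> \<le> Bx n (x + 3) \<and>
               u + v * beta (aa k) p \<ge> 1 \<and> val n (aa k) p u v > xs k - 1 / (real k + 2))"

definition Pos :: "nat \<Rightarrow> nat \<Rightarrow> int list \<times> int list \<times> (int \<times> int) \<Rightarrow> nat set" where
  "Pos k L s = {p. p \<ge> TT k + L \<and> NM k p \<and> sig n L (aa k) p = s}"

definition G :: "nat \<Rightarrow> int list \<times> int list \<times> (int \<times> int) \<Rightarrow> nat set" where
  "G L s = {k. infinite (Pos k L s)}"

lemma each_G: "\<exists>s\<in>Sfin n (x + 3) L. k \<in> G L s"
proof -
  define S where "S = {p. p \<ge> TT k + L \<and> NM k p}"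
  have infS: "infinite S" unfolding infinite_nat_iff_unbounded_le
  proof
    fix m
    have "\<exists>p\<ge>max m (TT k + L). NM k p" unfolding NM_def by (rule nm)
    then obtain p where "p \<ge> max m (TT k + L)" "NM k p" by blast
    then show "\<exists>p\<ge>m. p \<in> S" unfolding S_def by auto
  qed
  have sub: "sig n L (aa k) ` S \<subseteq> Sfin n (x + 3) L"
  proof (rule image_subsetI)
    fix p assume "p \<in> S"
    then have "p \<ge> TT k + L" unfolding S_def by simp
    moreover have "\<And>j. j \<ge> TT k \<Longrightarrow> real_of_int (aa k (Suc j)) \<le> x + 3" by (rule dig)
    ultimately show "sig n L (aa k) p \<in> Sfin n (x + 3) L" using sig_in_Sfin[OF n va[of k]] by blast
  qed
  have fin: "finite (sig n L (aa k) ` S)" using finite_subset[OF sub Sfin_finite] .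
  obtain p0 where p0: "p0 \<in> S" "infinite {p\<in>S. sig n L (aa k) p = sig n L (aa k) p0}"
    using pigeonhole_infinite[OF infS fin] by blast
  have "{p\<in>S. sig n L (aa k) p = sig n L (aa k) p0} = Pos k L (sig n L (aa k) p0)"
    unfolding S_def Pos_def by (simp add: conj_assoc)
  then have "k \<in> G L (sig n L (aa k) p0)" using p0(2) unfolding G_def by simp
  moreover have "sig n L (aa k) p0 \<in> Sfin n (x + 3) L" using sub p0(1) by blast
  ultimately show ?thesis by blast
qed

lemma ex_G: "infinite I \<Longrightarrow> \<exists>s. infinite (I \<inter> G L s)"
proof (rule ccontr)
  assume I: "infinite I" and c: "\<not> (\<exists>s. infinite (I \<inter> G L s))"
  have "I \<subseteq> (\<Union>s\<in>Sfin n (x + 3) L. I \<inter> G L s)"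
  proof
    fix k assume "k \<in> I"
    obtain s where "s \<in> Sfin n (x + 3) L" "k \<in> G L s" using each_G[of L k] by blast
    then show "k \<in> (\<Union>s\<in>Sfin n (x + 3) L. I \<inter> G L s)" using \<open>k \<in> I\<close> by blast
  qed
  moreover have "finite (\<Union>s\<in>Sfin n (x + 3) L. I \<inter> G L s)"
  proof (rule finite_UN_I)
    show "finite (Sfin n (x + 3) L)" by (rule Sfin_finite)
    fix s have "\<not> infinite (I \<inter> G L s)" using c by blast
    then show "finite (I \<inter> G L s)" by simp
  qed
  ultimately show False using I finite_subset by blast
qed

definition ks where "ks = kseq G"
definition ss where "ss = sseq G"

lemma ks_all: "strict_mono ks \<and> (\<forall>L. ks L \<in> G L (ss L)) \<and> (\<forall>L. ks (Suc L) \<in> G L (ss L))"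
  unfolding ks_def ss_def by (rule nested_choice) (rule ex_G)

lemma ks_props: "strict_mono ks" "\<And>L. ks L \<in> G L (ss L)" "\<And>L. ks (Suc L) \<in> G L (ss L)"
  using ks_all by blast+

lemma ks_ge: "ks r \<ge> r"
  using ks_props(1) by (rule strict_mono_imp_increasing)

definition In' :: "nat \<Rightarrow> nat" where
  "In' r = (LEAST p. p \<in> Pos (ks (Suc r)) r (ss r))"

definition In :: "nat \<Rightarrow> nat" where
  "In r = (case r of 0 \<Rightarrow> 0 | Suc r' \<Rightarrow> In' r')"

definition Out :: "nat \<Rightarrow> nat" where
  "Out r = (LEAST p. p \<in> Pos (ks r) r (ss r) \<and> p \<ge> In r + r + 1)"

lemma In_props: "In (Suc r) \<in> Pos (ks (Suc r)) r (ss r)"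
proof -
  have "infinite (Pos (ks (Suc r)) r (ss r))" using ks_props(3)[of r] unfolding G_def by simp
  then obtain p where "p \<in> Pos (ks (Suc r)) r (ss r)" by (metis finite.emptyI ex_in_conv)
  then have "(LEAST p. p \<in> Pos (ks (Suc r)) r (ss r)) \<in> Pos (ks (Suc r)) r (ss r)" by (rule LeastI)
  then show ?thesis unfolding In_def In'_def by simp
qed

lemma Out_props: "Out r \<in> Pos (ks r) r (ss r) \<and> Out r \<ge> In r + r + 1"
proof -
  have "infinite (Pos (ks r) r (ss r))" using ks_props(2)[of r] unfolding G_def by simp
  then obtain p where "p \<in> Pos (ks r) r (ss r)" "p \<ge> In r + r + 1"
    unfolding infinite_nat_iff_unbounded_le by blast
  then have "p \<in> Pos (ks r) r (ss r) \<and> p \<ge> In r + r + 1" by blast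
  then show ?thesis unfolding Out_def by (rule LeastI)
qed

lemma lens: "In (Suc r) < Out (Suc r)"
  using Out_props[of "Suc r"] by simp

sublocale g: gluing In Out
  by unfold_locales (rule lens)

definition A :: "nat \<Rightarrow> nat \<Rightarrow> int" where
  "A r = aa (ks r)"

definition b :: "nat \<Rightarrow> int" where
  "b = glue A In Out"

lemma match:
  "sig n r (A r) (Out r) = sig n r (A (Suc r)) (In (Suc r))"
  using Out_props[of r] In_props[of r] unfolding Pos_def A_def by simp

lemma vb: "valid b"
  unfolding b_def by (rule g.glue_valid) (simp add: A_def va)

lemma stb: "st n b k = st n (A (gseg In Out k)) (gpos In Out k)"
  unfolding b_def by (rule g.glue_state) (use sig_eqD[OF match] in blast)

lemma win:
  assumes k: "gE In Out r < k" "k \<le> gE In Out (Suc r)" and R: "R \<le> r"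
  shows "agree (A (Suc r)) (gpos In Out k) b k R"
  unfolding b_def
proof (rule g.window[where L = "\<lambda>r. r"])
  show "\<And>r e. e < r \<Longrightarrow> A r (Out r + 1 + e) = A (Suc r) (In (Suc r) + 1 + e)"
    using sig_eqD[OF match] by blast
  show "\<And>r e. e < r \<Longrightarrow> A r (Out r - e) = A (Suc r) (In (Suc r) - e)"
    using sig_eqD[OF match] by blast
  show "gE In Out r < k" "k \<le> gE In Out (Suc r)" by fact+
  show "R \<le> r" "R \<le> Suc r" using R by simp_all
  have "Out (Suc (Suc r)) \<ge> In (Suc (Suc r)) + Suc (Suc r) + 1" using Out_props[of "Suc (Suc r)"] by blast
  then show "R \<le> Out (Suc (Suc r)) - In (Suc (Suc r))" using R by linarith
  show "r = 0 \<or> R \<le> Out r - In r" using Out_props[of r] R by auto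
  show "R \<le> In (Suc r)" using In_props[of r] R unfolding Pos_def by simp
  show "R \<le> k" using k(1) g.E_ge[of r] R by simp
qed

lemma xs_bounds:
  assumes "k \<ge> r0"
  shows "xs k + 1 / (real k + 2) \<le> x + 2 / (real r0 + 2) \<and> xs k - 1 / (real k + 2) \<ge> x - 2 / (real r0 + 2)"
proof -
  have "1 / (real k + 2) \<le> 1 / (real r0 + 2)" using assms by (simp add: frac_le)
  then show ?thesis using xs[of k] by (simp add: abs_less_iff)
qed

lemma choose_r0:
  assumes "\<epsilon> > 0"
  shows "\<exists>r0\<ge>R. 2 / (real r0 + 2) \<le> \<epsilon>"
proof -
  obtain N :: nat where N: "real N > 2 / \<epsilon>" using reals_Archimedean2 by blast
  define r0 where "r0 = max R N"
  have "real r0 + 2 \<ge> 2 / \<epsilon>" unfolding r0_def using N by (simp add: le_max_iff_disj)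
  then have "2 / (real r0 + 2) \<le> \<epsilon>" using assms by (simp add: field_simps)
  moreover have "max R N \<ge> R" by simp
  ultimately show ?thesis unfolding r0_def by blast
qed

lemma seg_of: "m > gE In Out r0 \<Longrightarrow> \<exists>r\<ge>r0. gE In Out r < m \<and> m \<le> gE In Out (Suc r)"
proof -
  assume m: "m > gE In Out r0"
  have "\<not> m \<le> gE In Out 0" using m g.E_mono[of 0 r0] by simp
  then obtain r where r: "gE In Out r < m" "m \<le> gE In Out (Suc r)" using g.seg_exists[of m] by blast
  have "r \<ge> r0"
  proof (rule ccontr)
    assume "\<not> r \<ge> r0"
    then have "Suc r \<le> r0" by simp
    then have "gE In Out (Suc r) \<le> gE In Out r0" by (rule g.E_mono)
    then show False using r m by simp
  qed
  then show ?thesis using r by blast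
qed

lemma b_upper: "lambda_n n (cfval b) \<le> ereal x"
proof (rule ereal_le_from_eps)
  fix \<epsilon> :: real assume ep: "0 < \<epsilon>" "\<epsilon> \<le> 1/8"
  define e2 where "e2 = \<epsilon> / 2"
  have e2: "e2 > 0" "e2 \<le> 1" unfolding e2_def using ep by auto
  have Yp: "x + 2 > 0" using x1 by simp
  have M0: "x + 3 \<ge> 0" using x1 by simp
  obtain R0 where R0: "\<forall>R\<ge>R0. good_R n (x + 3) (x + 2) e2 R" using good_R_exists[OF Yp e2(1) M0] by blast
  define R where "R = max R0 1"
  have gR: "good_R n (x + 3) (x + 2) e2 R" using R0 unfolding R_def by simp
  obtain r0 where r0: "r0 \<ge> R" "2 / (real r0 + 2) \<le> e2" using choose_r0[OF e2(1)] by blast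
  have "lambda_n n (cfval b) \<le> ereal (x + e2 + e2)"
  proof (rule upper_R[OF vb n _ M0 _ gR e2(2)])
    show "1 \<le> x + e2" using x1 e2 by simp
    show "x + e2 \<le> x + 2" using e2 by simp
    show "\<forall>m\<ge>Suc (gE In Out r0). \<exists>c p. valid c \<and> agree c p b m R \<and> st n c p = st n b m \<and>
        real_of_int (c (Suc p)) \<le> x + 3 \<and> (\<forall>u v. u + v * beta c p \<ge> 1/2 \<longrightarrow> val n c p u v \<le> x + e2)"
    proof (intro allI impI)
      fix m assume "m \<ge> Suc (gE In Out r0)"
      then have "m > gE In Out r0" by simp
      then obtain r where r: "r \<ge> r0" "gE In Out r < m" "m \<le> gE In Out (Suc r)" using seg_of by blast
      define k where "k = ks (Suc r)"
      define p where "p = gpos In Out m"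
      have sp: "gseg In Out m = Suc r" "p = m - gE In Out r + In (Suc r)" using g.segS[OF r(2,3)] unfolding p_def by auto
      have pT: "p \<ge> TT k"
        using In_props[of r] sp(2) unfolding Pos_def k_def by simp
      have kr: "k \<ge> r0" unfolding k_def using ks_ge[of "Suc r"] r(1) by simp
      have ag: "agree (aa k) p b m R" using win[OF r(2,3)] r(1) r0(1) unfolding A_def k_def p_def by simp
      have st: "st n (aa k) p = st n b m" using stb[of m] sp unfolding A_def k_def p_def by simp
      have dg: "real_of_int (aa k (Suc p)) \<le> x + 3" using dig[OF pT] .
      have vl: "\<forall>u v. u + v * beta (aa k) p \<ge> 1/2 \<longrightarrow> val n (aa k) p u v \<le> x + e2"
      proof (intro allI impI)
        fix u v :: int assume "u + v * beta (aa k) p \<ge> 1/2"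
        then have "val n (aa k) p u v < xs k + 1 / (real k + 2)" using upb[OF pT] by blast
        then show "val n (aa k) p u v \<le> x + e2" using xs_bounds[OF kr] r0(2) by linarith
      qed
      show "\<exists>c p. valid c \<and> agree c p b m R \<and> st n c p = st n b m \<and>
        real_of_int (c (Suc p)) \<le> x + 3 \<and> (\<forall>u v. u + v * beta c p \<ge> 1/2 \<longrightarrow> val n c p u v \<le> x + e2)"
        using va[of k] ag st dg vl by blast
    qed
  qed
  moreover have "x + e2 + e2 = x + \<epsilon>" unfolding e2_def by simp
  ultimately show "lambda_n n (cfval b) \<le> ereal (x + \<epsilon>)" by simp
qed

lemma b_lower: "ereal x \<le> lambda_n n (cfval b)"
proof (rule ereal_ge_from_eps)
  fix \<epsilon> :: real assume ep: "0 < \<epsilon>" "\<epsilon> \<le> 1/8"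
  define e2 where "e2 = \<epsilon> / 2"
  have e2: "e2 > 0" "e2 \<le> 1/16" unfolding e2_def using ep by auto
  have Yp: "x + 2 > 0" using x1 by simp
  have M0: "x + 3 \<ge> 0" using x1 by simp
  obtain R0 where R0: "\<forall>R\<ge>R0. good_R n (x + 3) (x + 2) e2 R" using good_R_exists[OF Yp e2(1) M0] by blast
  define R where "R = max R0 1"
  have gR: "good_R n (x + 3) (x + 2) e2 R" using R0 unfolding R_def by simp
  obtain r0 where r0: "r0 \<ge> R" "2 / (real r0 + 2) \<le> e2" using choose_r0[OF e2(1)] by blast
  have "ereal (x - e2 - e2) \<le> lambda_n n (cfval b)"
  proof (rule lower_R[OF vb n _ M0 gR])
    show "x - e2 - e2 > 0" using x1 e2 by simp
    fix K
    define r where "r = max r0 K"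
    define m where "m = gE In Out (Suc r)"
    have rr: "gE In Out r < m" "m \<le> gE In Out (Suc r)" unfolding m_def using g.E_Suc_gt by auto
    have mK: "m \<ge> K" unfolding m_def r_def using g.E_ge[of "Suc (max r0 K)"] by simp
    define k where "k = ks (Suc r)"
    have pm: "gseg In Out m = Suc r" "gpos In Out m = Out (Suc r)" unfolding m_def using g.pos_at_end[of "Suc r"] by (simp_all only:)
    have OP: "Out (Suc r) \<in> Pos k (Suc r) (ss (Suc r))" using Out_props[of "Suc r"] unfolding k_def by blast
    then have pT: "Out (Suc r) \<ge> TT k" and nmk: "NM k (Out (Suc r))" unfolding Pos_def by auto
    obtain u v where uv: "\<bar>real_of_int u\<bar> \<le> Bx n (x + 3)" "\<bar>real_of_int v\<bar> \<le> Bx n (x + 3)"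
        "u + v * beta (aa k) (Out (Suc r)) \<ge> 1" "val n (aa k) (Out (Suc r)) u v > xs k - 1 / (real k + 2)"
      using nmk unfolding NM_def by blast
    have kr: "k \<ge> r0" unfolding k_def r_def using ks_ge[of "Suc (max r0 K)"] by simp
    have ag: "agree (aa k) (Out (Suc r)) b m R" using win[OF rr] r0(1) pm unfolding A_def k_def r_def by simp
    have st: "st n (aa k) (Out (Suc r)) = st n b m" using stb[of m] pm unfolding A_def k_def by simp
    have dg: "real_of_int (aa k (Suc (Out (Suc r)))) \<le> x + 3" using dig[OF pT] .
    have v1: "val n (aa k) (Out (Suc r)) u v \<ge> x - e2" using uv(4) xs_bounds[OF kr] r0(2) by linarith
    have "u + v * beta (aa k) (Out (Suc r)) \<ge> 1/2" using uv(3) by simp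
    then have "val n (aa k) (Out (Suc r)) u v < xs k + 1 / (real k + 2)" using upb[OF pT] by blast
    then have v2: "val n (aa k) (Out (Suc r)) u v \<le> x + 2" using xs_bounds[OF kr] r0(2) e2 by linarith
    show "\<exists>m\<ge>K. \<exists>c p u v. valid c \<and> agree c p b m R \<and> st n c p = st n b m \<and>
        real_of_int (c (Suc p)) \<le> x + 3 \<and> \<bar>real_of_int u\<bar> \<le> Bx n (x + 3) \<and> \<bar>real_of_int v\<bar> \<le> Bx n (x + 3) \<and>
        u + v * beta c p \<ge> 1 \<and> val n c p u v \<ge> x - e2 \<and> val n c p u v \<le> x + 2"
      using mK va[of k] ag st dg uv(1,2,3) v1 v2 by blast
  qed
  moreover have "x - e2 - e2 = x - \<epsilon>" unfolding e2_def by simp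
  ultimately show "ereal (x - \<epsilon>) \<le> lambda_n n (cfval b)" by simp
qed

lemma b_lambda: "lambda_n n (cfval b) = ereal x"
  using b_upper b_lower by (rule antisym)

end


lemma dirB:
  assumes n: "n > 0" and app: "\<And>e. e > 0 \<Longrightarrow> \<exists>x'\<in>L_n n. \<bar>x' - x\<bar> < e"
  shows "x \<in> L_n n"
proof -
  have ex: "\<forall>k. \<exists>p. valid (snd p) \<and> lambda_n n (cfval (snd p)) = ereal (fst p) \<and> \<bar>fst p - x\<bar> < 1 / (real k + 2)"
  proof
    fix k :: nat
    have "1 / (real k + 2) > 0" by simp
    then obtain x' where x': "x' \<in> L_n n" "\<bar>x' - x\<bar> < 1 / (real k + 2)" using app by blast
    then obtain \<xi> where xi: "\<xi> \<notin> \<rat>" "lambda_n n \<xi> = ereal x'" unfolding L_n_def by blast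
    obtain a where "valid a" "cfval a = \<xi>" using exists_cf[OF xi(1)] by blast
    then show "\<exists>p. valid (snd p) \<and> lambda_n n (cfval (snd p)) = ereal (fst p) \<and> \<bar>fst p - x\<bar> < 1 / (real k + 2)"
      using xi x' by (intro exI[of _ "(x', a)"]) simp
  qed
  then obtain f where f: "\<forall>k. valid (snd (f k)) \<and> lambda_n n (cfval (snd (f k))) = ereal (fst (f k)) \<and>
      \<bar>fst (f k) - x\<bar> < 1 / (real k + 2)"
    by (metis choice)
  define xs where "xs k = fst (f k)" for k
  define aa where "aa k = snd (f k)" for k
  have va: "\<And>k. valid (aa k)" and lam: "\<And>k. lambda_n n (cfval (aa k)) = ereal (xs k)"
    and xs: "\<And>k. \<bar>xs k - x\<bar> < 1 / (real k + 2)"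
    using f unfolding xs_def aa_def by auto
  have xs1: "xs k \<ge> 1" for k using lam_ge1[OF va n, of k] lam[of k] by simp
  have x1: "x \<ge> 1"
  proof (rule ccontr)
    assume "\<not> x \<ge> 1"
    then have d: "1 - x > 0" by simp
    obtain N :: nat where N: "real N > 1 / (1 - x)" using reals_Archimedean2 by blast
    have "real N + 2 > 1 / (1 - x)" using N by simp
    then have "1 / (real N + 2) < 1 - x" using d by (simp add: field_simps)
    then show False using xs[of N] xs1[of N] by (simp add: abs_less_iff)
  qed
  have hT: "\<forall>k. \<exists>T. (\<forall>j\<ge>T. real_of_int (aa k (Suc j)) \<le> x + 3) \<and>
      (\<forall>j\<ge>T. \<forall>u v. u + v * beta (aa k) j \<ge> 1/2 \<longrightarrow> val n (aa k) j u v < xs k + 1 / (real k + 2))"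
  proof
    fix k
    obtain J0 where J0: "\<forall>j\<ge>J0. real_of_int (aa k (Suc j)) \<le> xs k + 1" using digits_bounded[OF va n lam] by blast
    have "lambda_n n (cfval (aa k)) < ereal (xs k + 1 / (real k + 2))" using lam[of k] by simp
    moreover have "xs k + 1 / (real k + 2) > 0" using xs1[of k] by (smt (verit) divide_nonneg_nonneg of_nat_0_le_iff)
    ultimately obtain J1 where J1: "\<forall>j\<ge>J1. \<forall>u v. u + v * beta (aa k) j \<ge> 1/2 \<longrightarrow> val n (aa k) j u v < xs k + 1 / (real k + 2)"
      using lam_upper_D[OF va n] by blast
    have "xs k + 1 \<le> x + 3" using xs[of k] by (simp add: abs_less_iff) (smt (verit) divide_le_eq_1 of_nat_0_le_iff)
    then show "\<exists>T. (\<forall>j\<ge>T. real_of_int (aa k (Suc j)) \<le> x + 3) \<and>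
      (\<forall>j\<ge>T. \<forall>u v. u + v * beta (aa k) j \<ge> 1/2 \<longrightarrow> val n (aa k) j u v < xs k + 1 / (real k + 2))"
      using J0 J1 by (intro exI[of _ "max J0 J1"]) (auto intro: order_trans)
  qed
  then obtain TT where TT: "\<forall>k. (\<forall>j\<ge>TT k. real_of_int (aa k (Suc j)) \<le> x + 3) \<and>
      (\<forall>j\<ge>TT k. \<forall>u v. u + v * beta (aa k) j \<ge> 1/2 \<longrightarrow> val n (aa k) j u v < xs k + 1 / (real k + 2))"
    by (metis choice)
  have nm: "\<exists>p\<ge>J. \<exists>u v. \<bar>real_of_int u\<bar> \<le> Bx n (x + 3) \<and> \<bar>real_of_int v\<bar> \<le> Bx n (x + 3) \<and>
               u + v * beta (aa k) p \<ge> 1 \<and> val n (aa k) p u v > xs k - 1 / (real k + 2)" for k J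
  proof -
    have "ereal (xs k - 1 / (real k + 2)) < lambda_n n (cfval (aa k))" using lam[of k] by simp
    moreover have "xs k - 1 / (real k + 2) \<ge> 1/2"
    proof -
      have "1 / (real k + 2) \<le> 1/2" by (simp add: field_simps)
      then show ?thesis using xs1[of k] by linarith
    qed
    moreover have "\<And>j. j \<ge> TT k \<Longrightarrow> real_of_int (aa k (Suc j)) \<le> x + 3" using TT by blast
    ultimately show ?thesis using lam_lower_D[OF va n] by blast
  qed
  interpret bc: bctx n x aa xs TT
  proof
    show "n > 0" by fact
    show "x \<ge> 1" by fact
    show "\<And>k. valid (aa k)" by fact
    show "\<And>k. \<bar>xs k - x\<bar> < 1 / (real k + 2)" by fact
    show "\<And>k j. j \<ge> TT k \<Longrightarrow> real_of_int (aa k (Suc j)) \<le> x + 3" using TT by blast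
    show "\<And>k j u v. j \<ge> TT k \<Longrightarrow> u + v * beta (aa k) j \<ge> 1/2 \<Longrightarrow> val n (aa k) j u v < xs k + 1 / (real k + 2)"
      using TT by blast
    show "\<And>k J. \<exists>p\<ge>J. \<exists>u v. \<bar>real_of_int u\<bar> \<le> Bx n (x + 3) \<and> \<bar>real_of_int v\<bar> \<le> Bx n (x + 3) \<and>
               u + v * beta (aa k) p \<ge> 1 \<and> val n (aa k) p u v > xs k - 1 / (real k + 2)" by (rule nm)
  qed
  have "cfval bc.b \<notin> \<rat>" using cfval_irrat[OF bc.vb] .
  then show ?thesis unfolding L_n_def using bc.b_lambda by blast
qed

theorem proposition5p2:
  fixes n :: nat
  assumes "n > 0"
  shows "L_n n = closure (P_n n)"
proof
  show "L_n n \<subseteq> closure (P_n n)"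
  proof
    fix x assume "x \<in> L_n n"
    then obtain \<xi> where xi: "\<xi> \<notin> \<rat>" "lambda_n n \<xi> = ereal x" unfolding L_n_def by blast
    show "x \<in> closure (P_n n)" unfolding closure_approachable
    proof (intro allI impI)
      fix e :: real assume "e > 0"
      then obtain \<eta> x' where "quadratic_irrational \<eta>" "lambda_n n \<eta> = ereal x'" "\<bar>x' - x\<bar> < e"
        using dirA[OF assms xi] by blast
      then show "\<exists>y\<in>P_n n. dist y x < e" unfolding P_n_def dist_real_def by blast
    qed
  qed
next
  show "closure (P_n n) \<subseteq> L_n n"
  proof
    fix x assume x: "x \<in> closure (P_n n)"
    show "x \<in> L_n n"
    proof (rule dirB[OF assms])
      fix e :: real assume "e > 0"
      then obtain y where y: "y \<in> P_n n" "dist y x < e" using x unfolding closure_approachable by blast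
      have "y \<in> L_n n" using y(1) unfolding P_n_def L_n_def quadratic_irrational_def by blast
      then show "\<exists>x'\<in>L_n n. \<bar>x' - x\<bar> < e" using y(2) unfolding dist_real_def by blast
    qed
  qed
qed


end
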